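(* Let $M_1$ and $M_2$ be homogeneous monoids. Then the free product $M_1*M_2$ is FCRS if and only if both $M_1$ and $M_2$ are FCRS.
   Context: A monoid is homogeneous if it admits a finite presentation $\langle A\mid\mathcal{R}\rangle$ with $|u|=|v|$ for all $(u,v)\in\mathcal{R}$. A monoid is FCRS if it admits a presentation by a finite complete (noetherian and confluent) string rewriting system over some finite generating set. *)

theory Defs
  imports "HOL-Algebra.Group"
begin

definition rstep :: "'a set \<Rightarrow> ('a list \<times> 'a list) set \<Rightarrow> ('a list \<times> 'a list) set" where
  "rstep A R = {(x @ l @ y, x @ r @ y) | x l r y.
      (l, r) \<in> R \<and> x \<in> lists A \<and> y \<in> lists A \<and> l \<in> lists A \<and> r \<in> lists A}"

definition thue_cong :: "'a set \<Rightarrow> ('a list \<times> 'a list) set \<Rightarrow> ('a list \<times> 'a list) set" where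
  "thue_cong A R = Id_on (lists A) \<union> (rstep A R \<union> (rstep A R)\<inverse>)\<^sup>+"

definition pres_monoid :: "'a set \<Rightarrow> ('a list \<times> 'a list) set \<Rightarrow> ('a list set) monoid" where
  "pres_monoid A R = \<lparr> carrier = lists A // thue_cong A R,
      mult = (\<lambda>X Y. \<Union>x\<in>X. \<Union>y\<in>Y. thue_cong A R `` {x @ y}),
      one = thue_cong A R `` {[]} \<rparr>"

definition noetherian :: "'a set \<Rightarrow> ('a list \<times> 'a list) set \<Rightarrow> bool" where
  "noetherian A R \<longleftrightarrow> wf ((rstep A R)\<inverse>)"

definition confluent :: "'a set \<Rightarrow> ('a list \<times> 'a list) set \<Rightarrow> bool" where
  "confluent A R \<longleftrightarrow> (\<forall>w u v. (w, u) \<in> (rstep A R)\<^sup>* \<and> (w, v) \<in> (rstep A R)\<^sup>* \<longrightarrow>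
      (\<exists>z. (u, z) \<in> (rstep A R)\<^sup>* \<and> (v, z) \<in> (rstep A R)\<^sup>*))"

definition complete_rs :: "'a set \<Rightarrow> ('a list \<times> 'a list) set \<Rightarrow> bool" where
  "complete_rs A R \<longleftrightarrow> noetherian A R \<and> confluent A R"

text \<open>Finite alphabets are taken, without loss of generality, to be finite sets of naturals.\<close>
definition homogeneous_monoid :: "('m, 'e) monoid_scheme \<Rightarrow> bool" where
  "homogeneous_monoid M \<longleftrightarrow> (\<exists>(A :: nat set) R. finite A \<and> finite R \<and>
      R \<subseteq> lists A \<times> lists A \<and> (\<forall>(u, v) \<in> R. length u = length v) \<and>
      M \<cong> pres_monoid A R)"

definition FCRS :: "('m, 'e) monoid_scheme \<Rightarrow> bool" where
  "FCRS M \<longleftrightarrow> (\<exists>(A :: nat set) R. finite A \<and> finite R \<and>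
      R \<subseteq> lists A \<times> lists A \<and> complete_rs A R \<and> M \<cong> pres_monoid A R)"

text \<open>Free product M1 * M2, via its standard presentation: generators are the elements of
  M1 and M2 (disjointly), relations are the multiplication tables and the identities.\<close>
definition free_product :: "('a, 'e1) monoid_scheme \<Rightarrow> ('b, 'e2) monoid_scheme
    \<Rightarrow> (('a + 'b) list set) monoid" where
  "free_product M1 M2 = pres_monoid (Inl ` carrier M1 \<union> Inr ` carrier M2)
     ({([Inl x, Inl y], [Inl (x \<otimes>\<^bsub>M1\<^esub> y)]) | x y. x \<in> carrier M1 \<and> y \<in> carrier M1}
      \<union> {([Inl \<one>\<^bsub>M1\<^esub>], [])}
      \<union> {([Inr x, Inr y], [Inr (x \<otimes>\<^bsub>M2\<^esub> y)]) | x y. x \<in> carrier M2 \<and> y \<in> carrier M2}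
      \<union> {([Inr \<one>\<^bsub>M2\<^esub>], [])})"

end

theory Submission
  imports Defs
begin

lemma rstep_lists: "(u,v) \<in> rstep A R \<Longrightarrow> u \<in> lists A \<and> v \<in> lists A"
  unfolding rstep_def by auto

lemma rstepI: "(l,r) \<in> R \<Longrightarrow> x \<in> lists A \<Longrightarrow> y \<in> lists A \<Longrightarrow> l \<in> lists A \<Longrightarrow> r \<in> lists A
   \<Longrightarrow> (x@l@y, x@r@y) \<in> rstep A R"
  unfolding rstep_def by blast

lemma rstep_ctx:
  assumes "(u,v) \<in> rstep A R" "p \<in> lists A" "q \<in> lists A"
  shows "(p@u@q, p@v@q) \<in> rstep A R"
proof -
  from assms(1) obtain x l r y where "u = x@l@y" "v = x@r@y" "(l,r)\<in>R" "x \<in> lists A" "y\<in>lists A"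
    "l \<in> lists A" "r \<in> lists A" unfolding rstep_def by blast
  then have "((p@x)@l@(y@q), (p@x)@r@(y@q)) \<in> rstep A R" using assms(2,3)
    by (intro rstepI) auto
  then show ?thesis using \<open>u = x@l@y\<close> \<open>v = x@r@y\<close> by simp
qed

lemma rule_rstep: "(l,r) \<in> R \<Longrightarrow> l \<in> lists A \<Longrightarrow> r \<in> lists A \<Longrightarrow> (l,r) \<in> rstep A R"
  using rstepI[of l r R "[]" A "[]"] by simp

lemma symcl_lists:
  assumes "(u,v) \<in> (rstep A R \<union> (rstep A R)\<inverse>)\<^sup>+"
  shows "u \<in> lists A \<and> v \<in> lists A"
  using assms by (induction rule: trancl_induct) (auto dest: rstep_lists)

lemma tc_lists: "(u,v) \<in> thue_cong A R \<Longrightarrow> u \<in> lists A \<and> v \<in> lists A"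
  unfolding thue_cong_def Id_on_def using symcl_lists by blast

lemma tc_refl: "u \<in> lists A \<Longrightarrow> (u,u) \<in> thue_cong A R"
  unfolding thue_cong_def by auto

lemma tc_sym: "(u,v) \<in> thue_cong A R \<Longrightarrow> (v,u) \<in> thue_cong A R"
proof -
  have "sym ((rstep A R \<union> (rstep A R)\<inverse>)\<^sup>+)"
    by (rule sym_trancl) (auto simp: sym_def)
  then show "(u,v) \<in> thue_cong A R \<Longrightarrow> (v,u) \<in> thue_cong A R"
    unfolding thue_cong_def by (auto simp: sym_def Id_on_def)
qed

lemma tc_trans: "(u,v) \<in> thue_cong A R \<Longrightarrow> (v,w) \<in> thue_cong A R \<Longrightarrow> (u,w) \<in> thue_cong A R"
  unfolding thue_cong_def by (auto simp: Id_on_def intro: trancl_trans)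

lemma tc_step: "(u,v) \<in> rstep A R \<Longrightarrow> (u,v) \<in> thue_cong A R"
  unfolding thue_cong_def by auto

lemma tc_rule: "(l,r) \<in> R \<Longrightarrow> l \<in> lists A \<Longrightarrow> r \<in> lists A \<Longrightarrow> (l,r) \<in> thue_cong A R"
  by (intro tc_step rule_rstep)

lemma tc_equiv: "equiv (lists A) (thue_cong A R)"
proof (rule equivI)
  show "thue_cong A R \<subseteq> lists A \<times> lists A"
  proof
    fix p assume "p \<in> thue_cong A R"
    then show "p \<in> lists A \<times> lists A" using tc_lists[of "fst p" "snd p" A R] by (simp add: mem_Times_iff)
  qed
  show "refl_on (lists A) (thue_cong A R)" by (rule refl_onI) (rule tc_refl)
  show "sym (thue_cong A R)" by (rule symI) (rule tc_sym)
  show "trans (thue_cong A R)" by (rule transI) (rule tc_trans)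
qed

lemma tc_ctx:
  assumes "(u,v) \<in> thue_cong A R" "p \<in> lists A" "q \<in> lists A"
  shows "(p@u@q, p@v@q) \<in> thue_cong A R"
proof -
  let ?S = "rstep A R \<union> (rstep A R)\<inverse>"
  have "(p@u@q, p@v@q) \<in> ?S\<^sup>+" if "(u,v) \<in> ?S\<^sup>+" for u v
    using that
  proof (induction rule: trancl_induct)
    case (base y) then show ?case using rstep_ctx assms(2,3) by blast
  next
    case (step y z)
    then have "(p@y@q, p@z@q) \<in> ?S" using rstep_ctx assms(2,3) by blast
    then show ?case using step by (meson trancl.trancl_into_trancl)
  qed
  then show ?thesis using assms unfolding thue_cong_def by (auto simp: Id_on_def)
qed

lemma tc_append:
  assumes "(u,u') \<in> thue_cong A R" "(v,v') \<in> thue_cong A R"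
  shows "(u@v, u'@v') \<in> thue_cong A R"
proof -
  have "(u@v, u'@v) \<in> thue_cong A R" using tc_ctx[OF assms(1), of "[]" v] tc_lists[OF assms(2)] by auto
  moreover have "(u'@v, u'@v') \<in> thue_cong A R" using tc_ctx[OF assms(2), of u' "[]"] tc_lists[OF assms(1)] by auto
  ultimately show ?thesis by (rule tc_trans)
qed

abbreviation cls where "cls A R w \<equiv> thue_cong A R `` {w}"

lemma cls_eq_iff: "u \<in> lists A \<Longrightarrow> v \<in> lists A \<Longrightarrow> cls A R u = cls A R v \<longleftrightarrow> (u,v) \<in> thue_cong A R"
  by (rule eq_equiv_class_iff[OF tc_equiv])

lemma cls_self: assumes "u \<in> lists A" shows "u \<in> cls A R u"
  using ImageI[OF tc_refl[OF assms], of "{u}" R] by simp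

lemma pres_carrier: "carrier (pres_monoid A R) = lists A // thue_cong A R"
  by (simp add: pres_monoid_def)

lemma pres_one: "one (pres_monoid A R) = cls A R []"
  by (simp add: pres_monoid_def)

lemma cls_in_carrier: "u \<in> lists A \<Longrightarrow> cls A R u \<in> carrier (pres_monoid A R)"
  by (simp add: pres_carrier quotientI)

lemma pres_mult:
  assumes "u \<in> lists A" "v \<in> lists A"
  shows "cls A R u \<otimes>\<^bsub>pres_monoid A R\<^esub> cls A R v = cls A R (u@v)"
proof -
  have "(\<Union>x\<in>cls A R u. \<Union>y\<in>cls A R v. cls A R (x@y)) = cls A R (u@v)"
  proof -
    have eq: "cls A R (x@y) = cls A R (u@v)" if "x \<in> cls A R u" "y \<in> cls A R v" for x y
    proof -
      have "(u,x) \<in> thue_cong A R" "(v,y) \<in> thue_cong A R" using that by auto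
      then have h: "(u@v, x@y) \<in> thue_cong A R" by (rule tc_append)
      have "u@v \<in> lists A" "x@y \<in> lists A" using tc_lists[OF h] by auto
      then show ?thesis using cls_eq_iff h tc_sym by metis
    qed
    have "(\<Union>x\<in>cls A R u. \<Union>y\<in>cls A R v. cls A R (x@y)) = (\<Union>x\<in>cls A R u. \<Union>y\<in>cls A R v. cls A R (u@v))"
      using eq by (intro SUP_cong refl) 
    also have "\<dots> = cls A R (u@v)"
    proof -
      have ne: "cls A R u \<noteq> {}" "cls A R v \<noteq> {}" using cls_self[OF assms(1)] cls_self[OF assms(2)] by blast+
      show ?thesis by (simp only: UN_constant ne if_False)
    qed
    finally show ?thesis .
  qed
  moreover have "cls A R u \<otimes>\<^bsub>pres_monoid A R\<^esub> cls A R v = (\<Union>x\<in>cls A R u. \<Union>y\<in>cls A R v. cls A R (x@y))"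
    unfolding pres_monoid_def by (simp only: monoid.select_convs)
  ultimately show ?thesis by (rule trans[rotated])
qed

lemma pres_carrierE:
  assumes "X \<in> carrier (pres_monoid A R)"
  obtains w where "w \<in> lists A" "X = cls A R w"
  using assms by (auto simp: pres_carrier elim!: quotientE)

lemma pres_monoid: "monoid (pres_monoid A R)"
proof (rule monoidI)
  fix x y assume "x \<in> carrier (pres_monoid A R)" "y \<in> carrier (pres_monoid A R)"
  then show "x \<otimes>\<^bsub>pres_monoid A R\<^esub> y \<in> carrier (pres_monoid A R)"
    by (elim pres_carrierE) (simp add: pres_mult cls_in_carrier)
next
  show "\<one>\<^bsub>pres_monoid A R\<^esub> \<in> carrier (pres_monoid A R)"
    by (simp add: pres_one cls_in_carrier)
next
  fix x y z assume "x \<in> carrier (pres_monoid A R)" "y \<in> carrier (pres_monoid A R)" "z \<in> carrier (pres_monoid A R)"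
  then show "x \<otimes>\<^bsub>pres_monoid A R\<^esub> y \<otimes>\<^bsub>pres_monoid A R\<^esub> z =
    x \<otimes>\<^bsub>pres_monoid A R\<^esub> (y \<otimes>\<^bsub>pres_monoid A R\<^esub> z)"
    by (elim pres_carrierE) (simp add: pres_mult)
next
  fix x assume "x \<in> carrier (pres_monoid A R)"
  then show "\<one>\<^bsub>pres_monoid A R\<^esub> \<otimes>\<^bsub>pres_monoid A R\<^esub> x = x"
    by (elim pres_carrierE) (simp add: pres_mult pres_one)
next
  fix x assume "x \<in> carrier (pres_monoid A R)"
  then show "x \<otimes>\<^bsub>pres_monoid A R\<^esub> \<one>\<^bsub>pres_monoid A R\<^esub> = x"
    by (elim pres_carrierE) (simp add: pres_mult pres_one)
qed

primrec ev :: "('b,'c) monoid_scheme \<Rightarrow> ('a \<Rightarrow> 'b) \<Rightarrow> 'a list \<Rightarrow> 'b" where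
  "ev N \<phi> [] = \<one>\<^bsub>N\<^esub>"
| "ev N \<phi> (a#w) = \<phi> a \<otimes>\<^bsub>N\<^esub> ev N \<phi> w"

lemma ev_closed: "monoid N \<Longrightarrow> \<phi> \<in> A \<rightarrow> carrier N \<Longrightarrow> w \<in> lists A \<Longrightarrow> ev N \<phi> w \<in> carrier N"
  by (induction w) (auto intro: monoid.m_closed monoid.one_closed)

lemma ev_append:
  assumes "monoid N" "\<phi> \<in> A \<rightarrow> carrier N" "u \<in> lists A" "v \<in> lists A"
  shows "ev N \<phi> (u@v) = ev N \<phi> u \<otimes>\<^bsub>N\<^esub> ev N \<phi> v"
  using assms(3)
proof (induction u)
  case Nil then show ?case using ev_closed[OF assms(1,2,4)] by (simp add: monoid.l_one[OF assms(1)])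
next
  case (Cons a u)
  have u: "u \<in> lists A" "a \<in> A" using Cons by auto
  have c: "\<phi> a \<in> carrier N" "ev N \<phi> u \<in> carrier N" "ev N \<phi> v \<in> carrier N"
    using u assms ev_closed[OF assms(1,2)] by auto
  show ?case using Cons.IH c by (simp add: monoid.m_assoc[OF assms(1)])
qed

lemma ev_respects:
  assumes "monoid N" "\<phi> \<in> A \<rightarrow> carrier N" "\<forall>(l,r)\<in>R. l \<in> lists A \<longrightarrow> r \<in> lists A \<longrightarrow> ev N \<phi> l = ev N \<phi> r"
    and "(u,v) \<in> thue_cong A R"
  shows "ev N \<phi> u = ev N \<phi> v"
proof -
  have st: "ev N \<phi> u = ev N \<phi> v" if "(u,v) \<in> rstep A R" for u v
  proof -
    from that obtain x l r y where h: "u = x@l@y" "v = x@r@y" "(l,r)\<in>R" "x \<in> lists A" "y\<in>lists A"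
      "l \<in> lists A" "r \<in> lists A" unfolding rstep_def by blast
    have e: "ev N \<phi> l = ev N \<phi> r" using assms(3) h(3,6,7) by auto
    have "ev N \<phi> u = ev N \<phi> x \<otimes>\<^bsub>N\<^esub> (ev N \<phi> l \<otimes>\<^bsub>N\<^esub> ev N \<phi> y)"
      unfolding h(1) using ev_append[OF assms(1,2)] h(4-7) by simp
    also have "\<dots> = ev N \<phi> x \<otimes>\<^bsub>N\<^esub> (ev N \<phi> r \<otimes>\<^bsub>N\<^esub> ev N \<phi> y)" by (simp only: e)
    also have "\<dots> = ev N \<phi> v"
      unfolding h(2) using ev_append[OF assms(1,2)] h(4-7) by simp
    finally show ?thesis .
  qed
  have tr: "ev N \<phi> u = ev N \<phi> v" if "(u,v) \<in> (rstep A R \<union> (rstep A R)\<inverse>)\<^sup>+" for u v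
    using that
  proof (induction rule: trancl_induct)
    case (base y)
    then consider "(u,y) \<in> rstep A R" | "(y,u) \<in> rstep A R" by blast
    then show ?case
    proof cases
      case 1 then show ?thesis by (rule st)
    next
      case 2 then show ?thesis using st[OF 2] by simp
    qed
  next
    case (step y z)
    then consider "(y,z) \<in> rstep A R" | "(z,y) \<in> rstep A R" by blast
    then show ?case
    proof cases
      case 1 then show ?thesis using st[OF 1] step.IH by simp
    next
      case 2 then show ?thesis using st[OF 2] step.IH by simp
    qed
  qed
  from assms(4) consider "u = v" | "(u,v) \<in> (rstep A R \<union> (rstep A R)\<inverse>)\<^sup>+"
    unfolding thue_cong_def Id_on_def by blast
  then show ?thesis by cases (simp, erule tr)
qed

definition ind :: "('b,'c) monoid_scheme \<Rightarrow> ('a \<Rightarrow> 'b) \<Rightarrow> 'a list set \<Rightarrow> 'b" where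
  "ind N \<phi> X = ev N \<phi> (SOME w. w \<in> X)"

lemma ind_cls:
  assumes "monoid N" "\<phi> \<in> A \<rightarrow> carrier N" "\<forall>(l,r)\<in>R. l \<in> lists A \<longrightarrow> r \<in> lists A \<longrightarrow> ev N \<phi> l = ev N \<phi> r"
    and "w \<in> lists A"
  shows "ind N \<phi> (cls A R w) = ev N \<phi> w"
proof -
  have "(SOME x. x \<in> cls A R w) \<in> cls A R w" using cls_self[OF assms(4)] by (rule someI)
  then have "(w, SOME x. x \<in> cls A R w) \<in> thue_cong A R" by simp
  then show ?thesis unfolding ind_def by (rule ev_respects[OF assms(1-3), symmetric])
qed

lemma ind_hom:
  assumes "monoid N" "\<phi> \<in> A \<rightarrow> carrier N" "\<forall>(l,r)\<in>R. l \<in> lists A \<longrightarrow> r \<in> lists A \<longrightarrow> ev N \<phi> l = ev N \<phi> r"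
  shows "ind N \<phi> \<in> hom (pres_monoid A R) N"
  unfolding hom_def
proof (intro CollectI conjI ballI)
  show "ind N \<phi> \<in> carrier (pres_monoid A R) \<rightarrow> carrier N"
  proof
    fix X assume "X \<in> carrier (pres_monoid A R)"
    then obtain u where u: "u \<in> lists A" "X = cls A R u" by (rule pres_carrierE)
    then show "ind N \<phi> X \<in> carrier N"
      using ind_cls[OF assms u(1)] ev_closed[OF assms(1,2) u(1)] by simp
  qed
next
  fix X Y assume "X \<in> carrier (pres_monoid A R)" "Y \<in> carrier (pres_monoid A R)"
  obtain u where u: "u \<in> lists A" "X = cls A R u" using \<open>X \<in> carrier (pres_monoid A R)\<close> by (rule pres_carrierE)
  obtain v where v: "v \<in> lists A" "Y = cls A R v" using \<open>Y \<in> carrier (pres_monoid A R)\<close> by (rule pres_carrierE)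
  note uv = u(1) v(1) u(2) v(2)
  have "ind N \<phi> (X \<otimes>\<^bsub>pres_monoid A R\<^esub> Y) = ind N \<phi> (cls A R (u@v))"
    using uv(3,4) pres_mult[OF uv(1,2)] by simp
  also have "\<dots> = ev N \<phi> (u@v)" using uv(1,2) by (intro ind_cls[OF assms]) simp
  also have "\<dots> = ev N \<phi> u \<otimes>\<^bsub>N\<^esub> ev N \<phi> v" using ev_append[OF assms(1,2) uv(1,2)] .
  also have "\<dots> = ind N \<phi> X \<otimes>\<^bsub>N\<^esub> ind N \<phi> Y" using uv(3,4) ind_cls[OF assms uv(1)] ind_cls[OF assms uv(2)] by simp
  finally show "ind N \<phi> (X \<otimes>\<^bsub>pres_monoid A R\<^esub> Y) = ind N \<phi> X \<otimes>\<^bsub>N\<^esub> ind N \<phi> Y" .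
qed

lemma ind_one:
  assumes "monoid N" "\<phi> \<in> A \<rightarrow> carrier N" "\<forall>(l,r)\<in>R. l \<in> lists A \<longrightarrow> r \<in> lists A \<longrightarrow> ev N \<phi> l = ev N \<phi> r"
  shows "ind N \<phi> \<one>\<^bsub>pres_monoid A R\<^esub> = \<one>\<^bsub>N\<^esub>"
  using ind_cls[OF assms, of "[]"] by (simp add: pres_one)

lemma iso_inv:
  assumes "monoid G" "h \<in> iso G H"
  shows "inv_into (carrier G) h \<in> iso H G"
proof -
  have h: "h \<in> hom G H" "bij_betw h (carrier G) (carrier H)"
    using assms(2) by (auto simp add: iso_def bij_betw_inv_into)
  then have HG: "bij_betw (inv_into (carrier G) h) (carrier H) (carrier G)"
    by (simp add: bij_betw_inv_into)
  have "inv_into (carrier G) h \<in> hom H G"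
    unfolding hom_def
  proof safe
    show *: "\<And>x. x \<in> carrier H \<Longrightarrow> inv_into (carrier G) h x \<in> carrier G"
      by (meson HG bij_betwE)
    show "inv_into (carrier G) h (x \<otimes>\<^bsub>H\<^esub> y) = inv_into (carrier G) h x \<otimes>\<^bsub>G\<^esub> inv_into (carrier G) h y"
      if "x \<in> carrier H" "y \<in> carrier H" for x y
    proof (rule inv_into_f_eq)
      show "inj_on h (carrier G)"
        using bij_betw_def h(2) by blast
      show "inv_into (carrier G) h x \<otimes>\<^bsub>G\<^esub> inv_into (carrier G) h y \<in> carrier G"
        by (simp add: * that monoid.m_closed[OF assms(1)])
      show "h (inv_into (carrier G) h x \<otimes>\<^bsub>G\<^esub> inv_into (carrier G) h y) = x \<otimes>\<^bsub>H\<^esub> y"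
        using h bij_betw_inv_into_right [of h] unfolding hom_def by (simp add: "*" that)
    qed
  qed
  then show ?thesis
    by (simp add: Group.iso_def bij_betw_inv_into h)
qed

definition pdata :: "('m,'e) monoid_scheme \<Rightarrow> 'a set \<Rightarrow> ('a list \<times> 'a list) set \<Rightarrow> ('a \<Rightarrow> 'm) \<Rightarrow> bool" where
  "pdata N B S f \<longleftrightarrow> f \<in> B \<rightarrow> carrier N \<and> (\<forall>m\<in>carrier N. \<exists>w\<in>lists B. ev N f w = m)
     \<and> (\<forall>u\<in>lists B. \<forall>v\<in>lists B. ev N f u = ev N f v \<longleftrightarrow> (u,v) \<in> thue_cong B S)"

lemma pdata_f: "pdata N B S f \<Longrightarrow> f \<in> B \<rightarrow> carrier N"
  unfolding pdata_def by blast

lemma pdata_surj: "pdata N B S f \<Longrightarrow> m \<in> carrier N \<Longrightarrow> \<exists>w. w \<in> lists B \<and> ev N f w = m"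
  unfolding pdata_def by blast

lemma pdata_ker: "pdata N B S f \<Longrightarrow> u \<in> lists B \<Longrightarrow> v \<in> lists B \<Longrightarrow> ev N f u = ev N f v \<longleftrightarrow> (u,v) \<in> thue_cong B S"
  unfolding pdata_def by blast

lemma hom_one_surj:
  assumes "monoid G" "monoid H" "g \<in> hom G H" "g ` carrier G = carrier H"
  shows "g \<one>\<^bsub>G\<^esub> = \<one>\<^bsub>H\<^esub>"
proof -
  have "\<one>\<^bsub>H\<^esub> \<in> carrier H" using monoid.one_closed[OF assms(2)] .
  then obtain y where y: "y \<in> carrier G" "g y = \<one>\<^bsub>H\<^esub>" using assms(4) by (metis imageE)
  have g1: "g \<one>\<^bsub>G\<^esub> \<in> carrier H" using assms(3) monoid.one_closed[OF assms(1)] unfolding hom_def by (simp add: Pi_iff)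
  have "g \<one>\<^bsub>G\<^esub> = g \<one>\<^bsub>G\<^esub> \<otimes>\<^bsub>H\<^esub> g y" using y g1 monoid.r_one[OF assms(2)] by simp
  also have "\<dots> = g (\<one>\<^bsub>G\<^esub> \<otimes>\<^bsub>G\<^esub> y)" using assms(3) y(1) monoid.one_closed[OF assms(1)] unfolding hom_def by simp
  also have "\<dots> = \<one>\<^bsub>H\<^esub>" using y monoid.l_one[OF assms(1)] by simp
  finally show ?thesis .
qed

lemma iso_to_pdata:
  assumes N: "monoid N" and iso: "N \<cong> pres_monoid B S"
  shows "\<exists>f. pdata N B S f"
proof -
  let ?P = "pres_monoid B S"
  obtain h where h: "h \<in> iso N ?P" using iso unfolding is_iso_def by blast
  define g where "g = inv_into (carrier N) h"
  have g: "g \<in> iso ?P N" unfolding g_def by (rule iso_inv[OF N h])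
  have ghom: "g \<in> hom ?P N" using g by (simp add: iso_def)
  have gbij: "bij_betw g (carrier ?P) (carrier N)" using g by (simp add: iso_def)
  have gc: "g X \<in> carrier N" if "X \<in> carrier ?P" for X using gbij that by (meson bij_betwE)
  have gm: "g (X \<otimes>\<^bsub>?P\<^esub> Y) = g X \<otimes>\<^bsub>N\<^esub> g Y" if "X \<in> carrier ?P" "Y \<in> carrier ?P" for X Y
    using ghom that unfolding hom_def by simp
  have g1: "g \<one>\<^bsub>?P\<^esub> = \<one>\<^bsub>N\<^esub>"
    by (rule hom_one_surj[OF pres_monoid N ghom]) (use gbij in \<open>simp add: bij_betw_def\<close>)
  define f where "f b = g (cls B S [b])" for b
  have evg: "ev N f w = g (cls B S w)" if "w \<in> lists B" for w
    using that
  proof (induction w rule: lists.induct)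
    case Nil then show ?case using g1 by (simp add: pres_one)
  next
    case (Cons b w)
    have "cls B S (b#w) = cls B S [b] \<otimes>\<^bsub>?P\<^esub> cls B S w"
      using pres_mult[of "[b]" B w S] Cons by simp
    moreover have "[b] \<in> lists B" "w \<in> lists B" using Cons by auto
    ultimately have "g (cls B S (b#w)) = f b \<otimes>\<^bsub>N\<^esub> g (cls B S w)"
      using gm[OF cls_in_carrier cls_in_carrier] f_def by simp
    then show ?case using Cons by simp
  qed
  have "f \<in> B \<rightarrow> carrier N"
  proof
    fix b assume "b \<in> B" then show "f b \<in> carrier N" unfolding f_def by (intro gc cls_in_carrier) simp
  qed
  moreover have "\<forall>m\<in>carrier N. \<exists>w\<in>lists B. ev N f w = m"
  proof
    fix m assume m: "m \<in> carrier N"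
    have "h m \<in> carrier ?P" using h m unfolding iso_def hom_def by (simp add: Pi_iff)
    then obtain w where w: "w \<in> lists B" "h m = cls B S w" by (rule pres_carrierE)
    have "g (h m) = m" unfolding g_def using h m by (intro inv_into_f_f) (simp_all add: iso_def bij_betw_def)
    then show "\<exists>w\<in>lists B. ev N f w = m" using w evg by metis
  qed
  moreover have "\<forall>u\<in>lists B. \<forall>v\<in>lists B. ev N f u = ev N f v \<longleftrightarrow> (u,v) \<in> thue_cong B S"
  proof (intro ballI)
    fix u v assume uv: "u \<in> lists B" "v \<in> lists B"
    have inj: "inj_on g (carrier ?P)" using gbij by (simp add: bij_betw_def)
    have "ev N f u = ev N f v \<longleftrightarrow> g (cls B S u) = g (cls B S v)" using evg uv by simp
    also have "\<dots> \<longleftrightarrow> cls B S u = cls B S v"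
      using inj_on_eq_iff[OF inj cls_in_carrier[OF uv(1)] cls_in_carrier[OF uv(2)]] .
    also have "\<dots> \<longleftrightarrow> (u,v) \<in> thue_cong B S" using cls_eq_iff uv by metis
    finally show "ev N f u = ev N f v \<longleftrightarrow> (u,v) \<in> thue_cong B S" .
  qed
  ultimately show ?thesis unfolding pdata_def by blast
qed

lemma pdata_to_iso:
  assumes N: "monoid N" and pd: "pdata N B S f"
  shows "N \<cong> pres_monoid B S"
proof -
  let ?P = "pres_monoid B S"
  have f: "f \<in> B \<rightarrow> carrier N" using pd unfolding pdata_def by simp
  have resp: "\<forall>(l,r)\<in>S. l \<in> lists B \<longrightarrow> r \<in> lists B \<longrightarrow> ev N f l = ev N f r"
  proof (intro ballI)
    fix p assume "p \<in> S"
    obtain l r where p: "p = (l,r)" by (cases p)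
    show "case p of (l,r) \<Rightarrow> l \<in> lists B \<longrightarrow> r \<in> lists B \<longrightarrow> ev N f l = ev N f r"
      unfolding p prod.case
    proof (intro impI)
      assume "l \<in> lists B" "r \<in> lists B"
      moreover have "(l,r) \<in> S" using \<open>p \<in> S\<close> p by simp
      ultimately have "(l,r) \<in> thue_cong B S" using tc_rule by metis
      then show "ev N f l = ev N f r" using pd \<open>l \<in> lists B\<close> \<open>r \<in> lists B\<close> unfolding pdata_def by simp
    qed
  qed
  have kh: "ind N f \<in> hom ?P N" by (rule ind_hom[OF N f resp])
  have "bij_betw (ind N f) (carrier ?P) (carrier N)"
    unfolding bij_betw_def
  proof
    show "inj_on (ind N f) (carrier ?P)"
    proof (rule inj_onI)
      fix X Y assume X: "X \<in> carrier ?P" and Y: "Y \<in> carrier ?P" and e: "ind N f X = ind N f Y"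
      obtain u where u: "u \<in> lists B" "X = cls B S u" using X by (rule pres_carrierE)
      obtain v where v: "v \<in> lists B" "Y = cls B S v" using Y by (rule pres_carrierE)
      have "ev N f u = ev N f v" using e u v ind_cls[OF N f resp] by simp
      then have "(u,v) \<in> thue_cong B S" using pd u v unfolding pdata_def by simp
      then show "X = Y" using u v cls_eq_iff by metis
    qed
    show "ind N f ` carrier ?P = carrier N"
    proof
      show "ind N f ` carrier ?P \<subseteq> carrier N" using kh unfolding hom_def by auto
      show "carrier N \<subseteq> ind N f ` carrier ?P"
      proof
        fix m assume "m \<in> carrier N"
        then obtain w where w: "w \<in> lists B" "ev N f w = m" using pd unfolding pdata_def by blast
        then have "ind N f (cls B S w) = m" using ind_cls[OF N f resp] by simp
        then show "m \<in> ind N f ` carrier ?P" using cls_in_carrier[OF w(1)] by (metis imageI)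
      qed
    qed
  qed
  then have "ind N f \<in> iso ?P N" using kh by (simp add: iso_def)
  then have "inv_into (carrier ?P) (ind N f) \<in> iso N ?P" by (rule iso_inv[OF pres_monoid])
  then show ?thesis by (rule is_isoI)
qed

lemma FCRS_iff:
  assumes "monoid N"
  shows "FCRS N \<longleftrightarrow> (\<exists>(B::nat set) S f. finite B \<and> finite S \<and> S \<subseteq> lists B \<times> lists B \<and> complete_rs B S \<and> pdata N B S f)"
proof
  assume "FCRS N"
  then obtain B :: "nat set" and S where h: "finite B" "finite S" "S \<subseteq> lists B \<times> lists B" "complete_rs B S"
    "N \<cong> pres_monoid B S" unfolding FCRS_def by blast
  then obtain f where "pdata N B S f" using iso_to_pdata[OF assms] by blast
  then show "\<exists>(B::nat set) S f. finite B \<and> finite S \<and> S \<subseteq> lists B \<times> lists B \<and> complete_rs B S \<and> pdata N B S f"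
    using h by blast
next
  assume "\<exists>(B::nat set) S f. finite B \<and> finite S \<and> S \<subseteq> lists B \<times> lists B \<and> complete_rs B S \<and> pdata N B S f"
  then obtain B :: "nat set" and S f where h: "finite B" "finite S" "S \<subseteq> lists B \<times> lists B" "complete_rs B S"
    "pdata N B S f" by blast
  then have "N \<cong> pres_monoid B S" using pdata_to_iso[OF assms] by blast
  then show "FCRS N" unfolding FCRS_def using h by blast
qed

lemma tc_length:
  assumes "\<forall>(u,v)\<in>S. length u = length v" "(u,v) \<in> thue_cong B S"
  shows "length u = length v"
proof -
  have st: "length u = length v" if "(u,v) \<in> rstep B S" for u v
  proof -
    from that obtain x l r y where h: "u = x@l@y" "v = x@r@y" "(l,r)\<in>S"
      unfolding rstep_def by blast
    have "length l = length r" using assms(1) h(3) by auto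
    then show ?thesis using h by simp
  qed
  have tr: "length u = length v" if "(u,v) \<in> (rstep B S \<union> (rstep B S)\<inverse>)\<^sup>+" for u v
    using that
  proof (induction rule: trancl_induct)
    case (base y)
    then consider "(u,y) \<in> rstep B S" | "(y,u) \<in> rstep B S" by blast
    then show ?case by cases (simp_all add: st)
  next
    case (step y z)
    then consider "(y,z) \<in> rstep B S" | "(z,y) \<in> rstep B S" by blast
    then show ?case using step.IH by cases (simp_all add: st)
  qed
  from assms(2) consider "u = v" | "(u,v) \<in> (rstep B S \<union> (rstep B S)\<inverse>)\<^sup>+"
    unfolding thue_cong_def Id_on_def by blast
  then show ?thesis by cases (simp, erule tr)
qed

lemma homog_length:
  assumes N: "monoid N" and hm: "homogeneous_monoid N"
  shows "\<exists>len :: _ \<Rightarrow> nat. (\<forall>x\<in>carrier N. \<forall>y\<in>carrier N. len (x \<otimes>\<^bsub>N\<^esub> y) = len x + len y)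
     \<and> (\<forall>x\<in>carrier N. len x = 0 \<longrightarrow> x = \<one>\<^bsub>N\<^esub>)"
proof -
  obtain B :: "nat set" and S where h: "\<forall>(u,v)\<in>S. length u = length v" "N \<cong> pres_monoid B S"
    using hm unfolding homogeneous_monoid_def by blast
  obtain f where pd: "pdata N B S f" using iso_to_pdata[OF N h(2)] by blast
  have f: "f \<in> B \<rightarrow> carrier N" using pdata_f[OF pd] .
  define len where "len m = length (SOME w. w \<in> lists B \<and> ev N f w = m)" for m
  have lenw: "len (ev N f w) = length w" if w: "w \<in> lists B" for w
  proof -
    let ?w = "SOME w'. w' \<in> lists B \<and> ev N f w' = ev N f w"
    have "?w \<in> lists B \<and> ev N f ?w = ev N f w" by (rule someI[of _ w]) (simp add: w)
    then have "(?w, w) \<in> thue_cong B S" using pdata_ker[OF pd _ w] by blast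
    then show ?thesis unfolding len_def using tc_length[OF h(1)] by simp
  qed
  have ex: "\<exists>w\<in>lists B. ev N f w = m" if "m \<in> carrier N" for m
    using pdata_surj[OF pd that] by blast
  have "\<forall>x\<in>carrier N. \<forall>y\<in>carrier N. len (x \<otimes>\<^bsub>N\<^esub> y) = len x + len y"
  proof (intro ballI)
    fix x y assume "x \<in> carrier N" "y \<in> carrier N"
    then obtain u v where uv: "u \<in> lists B" "v \<in> lists B" "ev N f u = x" "ev N f v = y" using ex by metis
    have "x \<otimes>\<^bsub>N\<^esub> y = ev N f (u@v)" using ev_append[OF N f uv(1,2)] uv by simp
    moreover have "u@v \<in> lists B" using uv by simp
    ultimately show "len (x \<otimes>\<^bsub>N\<^esub> y) = len x + len y" using lenw[of "u@v"] lenw[OF uv(1)] lenw[OF uv(2)] uv(3,4) by simp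
  qed
  moreover have "\<forall>x\<in>carrier N. len x = 0 \<longrightarrow> x = \<one>\<^bsub>N\<^esub>"
  proof (intro ballI impI)
    fix x assume "x \<in> carrier N" "len x = 0"
    then obtain w where w: "w \<in> lists B" "ev N f w = x" using ex by metis
    then have "w = []" using lenw[OF w(1)] \<open>len x = 0\<close> by simp
    then show "x = \<one>\<^bsub>N\<^esub>" using w by simp
  qed
  ultimately show ?thesis by (intro exI[of _ len] conjI)
qed

lemma rstep_mono:
  assumes "B1 \<subseteq> B" "S1 \<subseteq> S" shows "rstep B1 S1 \<subseteq> rstep B S"
proof
  fix p assume "p \<in> rstep B1 S1"
  then obtain x l r y where h: "p = (x@l@y, x@r@y)" "(l,r)\<in>S1" "x \<in> lists B1" "y\<in>lists B1"
      "l \<in> lists B1" "r \<in> lists B1" unfolding rstep_def by blast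
  have l: "x \<in> lists B" "y\<in>lists B" "l \<in> lists B" "r \<in> lists B"
    using h(3-6) lists_mono[OF assms(1)] by auto
  show "p \<in> rstep B S" unfolding h(1) using rstepI[OF _ l] h(2) assms(2) by blast
qed

lemma CR:
  assumes "confluent A R" "(u,v) \<in> thue_cong A R"
  shows "\<exists>z. (u,z) \<in> (rstep A R)\<^sup>* \<and> (v,z) \<in> (rstep A R)\<^sup>*"
proof -
  let ?r = "rstep A R"
  have "\<exists>z. (u,z) \<in> ?r\<^sup>* \<and> (v,z) \<in> ?r\<^sup>*" if "(u,v) \<in> (?r \<union> ?r\<inverse>)\<^sup>+" for v
    using that
  proof (induction rule: trancl_induct)
    case (base y)
    then consider "(u,y) \<in> ?r" | "(y,u) \<in> ?r" by blast
    then show ?case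
    proof cases
      case 1 then show ?thesis by (intro exI[of _ y]) simp
    next
      case 2 then show ?thesis by (intro exI[of _ u]) simp
    qed
  next
    case (step y w)
    then obtain z where z: "(u,z) \<in> ?r\<^sup>*" "(y,z) \<in> ?r\<^sup>*" by blast
    from step(2) consider "(y,w) \<in> ?r" | "(w,y) \<in> ?r" by blast
    then show ?case
    proof cases
      case 1
      then have "(y,w) \<in> ?r\<^sup>*" by simp
      then obtain z' where "(z,z') \<in> ?r\<^sup>*" "(w,z') \<in> ?r\<^sup>*"
        using assms(1) z(2) unfolding confluent_def by blast
      then show ?thesis using z(1) by (meson rtrancl_trans)
    next
      case 2
      then have "(w,z) \<in> ?r\<^sup>*" using z(2) by (meson converse_rtrancl_into_rtrancl)
      then show ?thesis using z(1) by blast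
    qed
  qed
  moreover have "(u,u) \<in> ?r\<^sup>*" by simp
  ultimately show ?thesis using assms(2) unfolding thue_cong_def Id_on_def by blast
qed

lemma join_tc:
  assumes "(u,z) \<in> (rstep A R)\<^sup>*" "(v,z) \<in> (rstep A R)\<^sup>*" "u \<in> lists A" "v \<in> lists A"
  shows "(u,v) \<in> thue_cong A R"
proof -
  let ?r = "rstep A R"
  have "(u,z) \<in> (?r \<union> ?r\<inverse>)\<^sup>*" using assms(1) by (rule rtrancl_mono[THEN subsetD, rotated]) blast
  moreover have "(z,v) \<in> (?r \<union> ?r\<inverse>)\<^sup>*"
  proof -
    have "(z,v) \<in> (?r\<inverse>)\<^sup>*" using assms(2) by (simp add: rtrancl_converse)
    then show ?thesis by (rule rtrancl_mono[THEN subsetD, rotated]) blast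
  qed
  ultimately have "(u,v) \<in> (?r \<union> ?r\<inverse>)\<^sup>*" by (rule rtrancl_trans)
  then have "u = v \<or> (u,v) \<in> (?r \<union> ?r\<inverse>)\<^sup>+" by (meson rtranclD)
  then show ?thesis using assms(3) unfolding thue_cong_def Id_on_def by blast
qed

lemma rtrancl_lists: "(u,v) \<in> (rstep A R)\<^sup>* \<Longrightarrow> u \<in> lists A \<Longrightarrow> v \<in> lists A"
  by (induction rule: rtrancl_induct) (auto dest: rstep_lists)

lemma sub_sys:
  assumes comp: "complete_rs B S" and sub: "B1 \<subseteq> B"
    and clos: "\<And>l r. (l,r) \<in> S \<Longrightarrow> l \<in> lists B1 \<Longrightarrow> r \<in> lists B1"
  defines "S1 \<equiv> S \<inter> (lists B1 \<times> lists B1)"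
  shows "complete_rs B1 S1" "\<And>u v. u \<in> lists B1 \<Longrightarrow> v \<in> lists B1 \<Longrightarrow> (u,v) \<in> thue_cong B S \<Longrightarrow> (u,v) \<in> thue_cong B1 S1"
proof -
  have mono: "rstep B1 S1 \<subseteq> rstep B S" unfolding S1_def by (rule rstep_mono[OF sub]) blast
  have down: "(u,v) \<in> rstep B1 S1" if "(u,v) \<in> rstep B S" "u \<in> lists B1" for u v
  proof -
    from that(1) obtain x l r y where h: "u = x@l@y" "v = x@r@y" "(l,r)\<in>S"
      unfolding rstep_def by blast
    have xly: "x \<in> lists B1" "l \<in> lists B1" "y \<in> lists B1" using that(2) h(1) by auto
    have r: "r \<in> lists B1" using clos[OF h(3) xly(2)] .
    have "(l,r) \<in> S1" unfolding S1_def using h(3) xly(2) r by simp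
    then show ?thesis using h(1,2) rstepI[of l r S1 x B1 y] xly r by simp
  qed
  have downs: "(u,v) \<in> (rstep B1 S1)\<^sup>*" if "(u,v) \<in> (rstep B S)\<^sup>*" "u \<in> lists B1" for u v
    using that
  proof (induction rule: rtrancl_induct)
    case base then show ?case by simp
  next
    case (step y z)
    then have "(u,y) \<in> (rstep B1 S1)\<^sup>*" by simp
    moreover have "y \<in> lists B1" using rtrancl_lists[OF calculation step(4)] .
    ultimately show ?case using down[OF step(2)] by (meson rtrancl.rtrancl_into_rtrancl)
  qed
  have ups: "(u,v) \<in> (rstep B S)\<^sup>*" if "(u,v) \<in> (rstep B1 S1)\<^sup>*" for u v
    using rtrancl_mono[OF mono] that by blast
  have noeth: "noetherian B1 S1"
    using comp unfolding complete_rs_def noetherian_def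
    by (meson converse_mono mono wf_subset)
  have conf: "confluent B1 S1"
    unfolding confluent_def
  proof (intro allI impI)
    fix w u v assume h: "(w,u) \<in> (rstep B1 S1)\<^sup>* \<and> (w,v) \<in> (rstep B1 S1)\<^sup>*"
    show "\<exists>z. (u,z) \<in> (rstep B1 S1)\<^sup>* \<and> (v,z) \<in> (rstep B1 S1)\<^sup>*"
    proof (cases "w \<in> lists B1")
      case False
      have "u = w" using h False by (metis converse_rtranclE rstep_lists)
      moreover have "v = w" using h False by (metis converse_rtranclE rstep_lists)
      ultimately show ?thesis by blast
    next
      case True
      obtain z where z: "(u,z) \<in> (rstep B S)\<^sup>*" "(v,z) \<in> (rstep B S)\<^sup>*"
        using comp ups h unfolding complete_rs_def confluent_def by blast
      have "u \<in> lists B1" "v \<in> lists B1" using h True rtrancl_lists by blast+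
      then show ?thesis using z downs by blast
    qed
  qed
  show "complete_rs B1 S1" using noeth conf unfolding complete_rs_def by simp
  fix u v assume uv: "u \<in> lists B1" "v \<in> lists B1" "(u,v) \<in> thue_cong B S"
  obtain z where z: "(u,z) \<in> (rstep B S)\<^sup>*" "(v,z) \<in> (rstep B S)\<^sup>*"
    using CR uv(3) comp unfolding complete_rs_def by blast
  show "(u,v) \<in> thue_cong B1 S1" using join_tc[OF downs[OF z(1) uv(1)] downs[OF z(2) uv(2)] uv(1,2)] .
qed

lemma tc_mono:
  assumes "B1 \<subseteq> B" "S1 \<subseteq> S" shows "thue_cong B1 S1 \<subseteq> thue_cong B S"
proof -
  have "rstep B1 S1 \<union> (rstep B1 S1)\<inverse> \<subseteq> rstep B S \<union> (rstep B S)\<inverse>" using rstep_mono[OF assms] by blast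
  then have "(rstep B1 S1 \<union> (rstep B1 S1)\<inverse>)\<^sup>+ \<subseteq> (rstep B S \<union> (rstep B S)\<inverse>)\<^sup>+" by (rule trancl_mono_subset)
  moreover have "Id_on (lists B1) \<subseteq> Id_on (lists B)" using lists_mono[OF assms(1)] by (auto simp: Id_on_def)
  ultimately show ?thesis unfolding thue_cong_def by blast
qed

lemma restrict_FCRS:
  fixes L :: "_ \<Rightarrow> nat"
  assumes P: "monoid P" and N: "monoid N" and fc: "FCRS P"
    and rho: "rh \<in> hom P N" and rho1: "rh \<one>\<^bsub>P\<^esub> = \<one>\<^bsub>N\<^esub>"
    and Ladd: "\<And>x y. x \<in> carrier P \<Longrightarrow> y \<in> carrier P \<Longrightarrow> L (x \<otimes>\<^bsub>P\<^esub> y) = L x + L y"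
    and iota: "\<And>m. m \<in> carrier N \<Longrightarrow> io m \<in> carrier P \<and> rh (io m) = m \<and> L (io m) = 0"
    and bk: "\<And>X. X \<in> carrier P \<Longrightarrow> L X = 0 \<Longrightarrow> X = io (rh X)"
  shows "FCRS N"
proof -
  obtain B :: "nat set" and S f where h: "finite B" "finite S" "S \<subseteq> lists B \<times> lists B" "complete_rs B S"
    and pd: "pdata P B S f" using fc unfolding FCRS_iff[OF P] by blast
  have f: "f \<in> B \<rightarrow> carrier P" using pdata_f[OF pd] .
  have rc: "rh x \<in> carrier N" if "x \<in> carrier P" for x using rho that unfolding hom_def by auto
  have rm: "rh (x \<otimes>\<^bsub>P\<^esub> y) = rh x \<otimes>\<^bsub>N\<^esub> rh y" if "x \<in> carrier P" "y \<in> carrier P" for x y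
    using rho that unfolding hom_def by auto
  have L1: "L \<one>\<^bsub>P\<^esub> = 0"
  proof -
    have "L (\<one>\<^bsub>P\<^esub> \<otimes>\<^bsub>P\<^esub> \<one>\<^bsub>P\<^esub>) = L \<one>\<^bsub>P\<^esub> + L \<one>\<^bsub>P\<^esub>" using Ladd monoid.one_closed[OF P] by blast
    then show ?thesis using monoid.l_one[OF P monoid.one_closed[OF P]] by simp
  qed
  define B1 where "B1 = {b \<in> B. L (f b) = 0}"
  have B1B: "B1 \<subseteq> B" unfolding B1_def by blast
  have Lev: "L (ev P f w) = 0 \<longleftrightarrow> w \<in> lists B1" if "w \<in> lists B" for w
    using that
  proof (induction w rule: lists.induct)
    case Nil then show ?case using L1 by simp
  next
    case (Cons b w)
    have "L (ev P f (b#w)) = L (f b) + L (ev P f w)"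
      using Ladd f Cons ev_closed[OF P f] by auto
    then show ?case using Cons unfolding B1_def by auto
  qed
  have rev: "rh (ev P f w) = ev N (\<lambda>b. rh (f b)) w" if "w \<in> lists B" for w
    using that
  proof (induction w rule: lists.induct)
    case Nil then show ?case using rho1 by simp
  next
    case (Cons b w)
    have "f b \<in> carrier P" "ev P f w \<in> carrier P" using f Cons ev_closed[OF P f] by auto
    then show ?case using Cons rm by simp
  qed
  have clos: "r \<in> lists B1" if "(l,r) \<in> S" "l \<in> lists B1" for l r
  proof -
    have lr: "l \<in> lists B" "r \<in> lists B" using h(3) that(1) by auto
    have "(l,r) \<in> thue_cong B S" using tc_rule[OF that(1) lr] .
    then have "ev P f l = ev P f r" using pdata_ker[OF pd lr] by simp
    moreover have "L (ev P f l) = 0" using Lev[OF lr(1)] that(2) by simp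
    ultimately show ?thesis using Lev[OF lr(2)] by simp
  qed
  define S1 where "S1 = S \<inter> (lists B1 \<times> lists B1)"
  have comp1: "complete_rs B1 S1" unfolding S1_def by (rule sub_sys(1)[OF h(4) B1B clos])
  have down: "(u,v) \<in> thue_cong B1 S1" if "u \<in> lists B1" "v \<in> lists B1" "(u,v) \<in> thue_cong B S" for u v
    unfolding S1_def by (rule sub_sys(2)[OF h(4) B1B clos that])
  have up: "thue_cong B1 S1 \<subseteq> thue_cong B S" by (rule tc_mono[OF B1B]) (simp add: S1_def)
  have LB: "lists B1 \<subseteq> lists B" using lists_mono[OF B1B] .
  define f1 where "f1 b = rh (f b)" for b
  have rev1: "rh (ev P f w) = ev N f1 w" if "w \<in> lists B" for w using rev[OF that] unfolding f1_def by simp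
  have "pdata N B1 S1 f1"
    unfolding pdata_def
  proof (intro conjI ballI)
    show "f1 \<in> B1 \<rightarrow> carrier N" unfolding f1_def using f B1B rc by auto
  next
    fix m assume m: "m \<in> carrier N"
    have i: "io m \<in> carrier P" "rh (io m) = m" "L (io m) = 0" using iota[OF m] by auto
    obtain w where w: "w \<in> lists B" "ev P f w = io m" using pdata_surj[OF pd i(1)] by blast
    have "w \<in> lists B1" using Lev[OF w(1)] w(2) i(3) by simp
    moreover have "ev N f1 w = m" using rev1[OF w(1)] w(2) i(2) by simp
    ultimately show "\<exists>w\<in>lists B1. ev N f1 w = m" by blast
  next
    fix u v assume u: "u \<in> lists B1" and v: "v \<in> lists B1"
    have uB: "u \<in> lists B" and vB: "v \<in> lists B" using u v LB by auto
    show "ev N f1 u = ev N f1 v \<longleftrightarrow> (u,v) \<in> thue_cong B1 S1"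
    proof
      assume e: "ev N f1 u = ev N f1 v"
      have cu: "ev P f u \<in> carrier P" "ev P f v \<in> carrier P" using ev_closed[OF P f] uB vB by auto
      have "L (ev P f u) = 0" "L (ev P f v) = 0" using Lev uB vB u v by auto
      then have "ev P f u = io (rh (ev P f u))" "ev P f v = io (rh (ev P f v))" using bk cu by auto
      moreover have "rh (ev P f u) = rh (ev P f v)" using e rev1 uB vB by simp
      ultimately have "ev P f u = ev P f v" by metis
      then have "(u,v) \<in> thue_cong B S" using pdata_ker[OF pd uB vB] by simp
      then show "(u,v) \<in> thue_cong B1 S1" using down u v by simp
    next
      assume "(u,v) \<in> thue_cong B1 S1"
      then have "(u,v) \<in> thue_cong B S" using up by blast
      then have "ev P f u = ev P f v" using pdata_ker[OF pd uB vB] by simp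
      then show "ev N f1 u = ev N f1 v" using rev1 uB vB by metis
    qed
  qed
  moreover have "finite B1" using h(1) B1B finite_subset by blast
  moreover have "finite S1" using h(2) unfolding S1_def by simp
  moreover have "S1 \<subseteq> lists B1 \<times> lists B1" unfolding S1_def by blast
  ultimately show ?thesis unfolding FCRS_iff[OF N] using comp1 by blast
qed

definition GA :: "('a,'e1) monoid_scheme \<Rightarrow> ('b,'e2) monoid_scheme \<Rightarrow> ('a + 'b) set" where
  "GA M1 M2 = Inl ` carrier M1 \<union> Inr ` carrier M2"

definition RF :: "('a,'e1) monoid_scheme \<Rightarrow> ('b,'e2) monoid_scheme \<Rightarrow> (('a + 'b) list \<times> ('a + 'b) list) set" where
  "RF M1 M2 = {([Inl x, Inl y], [Inl (x \<otimes>\<^bsub>M1\<^esub> y)]) | x y. x \<in> carrier M1 \<and> y \<in> carrier M1}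
      \<union> {([Inl \<one>\<^bsub>M1\<^esub>], [])}
      \<union> {([Inr x, Inr y], [Inr (x \<otimes>\<^bsub>M2\<^esub> y)]) | x y. x \<in> carrier M2 \<and> y \<in> carrier M2}
      \<union> {([Inr \<one>\<^bsub>M2\<^esub>], [])}"

lemma fp_def: "free_product M1 M2 = pres_monoid (GA M1 M2) (RF M1 M2)"
  unfolding free_product_def GA_def RF_def ..

lemma RF_cases:
  assumes "(l,r) \<in> RF M1 M2"
  obtains (LL) x y where "x \<in> carrier M1" "y \<in> carrier M1" "l = [Inl x, Inl y]" "r = [Inl (x \<otimes>\<^bsub>M1\<^esub> y)]"
    | (L1) "l = [Inl \<one>\<^bsub>M1\<^esub>]" "r = []"
    | (RR) x y where "x \<in> carrier M2" "y \<in> carrier M2" "l = [Inr x, Inr y]" "r = [Inr (x \<otimes>\<^bsub>M2\<^esub> y)]"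
    | (R1) "l = [Inr \<one>\<^bsub>M2\<^esub>]" "r = []"
  using assms unfolding RF_def by blast

lemma RF_LL: "x \<in> carrier M1 \<Longrightarrow> y \<in> carrier M1 \<Longrightarrow> ([Inl x, Inl y], [Inl (x \<otimes>\<^bsub>M1\<^esub> y)]) \<in> RF M1 M2"
  unfolding RF_def by blast
lemma RF_L1: "([Inl \<one>\<^bsub>M1\<^esub>], []) \<in> RF M1 M2"
  unfolding RF_def by blast
lemma RF_RR: "x \<in> carrier M2 \<Longrightarrow> y \<in> carrier M2 \<Longrightarrow> ([Inr x, Inr y], [Inr (x \<otimes>\<^bsub>M2\<^esub> y)]) \<in> RF M1 M2"
  unfolding RF_def by blast
lemma RF_R1: "([Inr \<one>\<^bsub>M2\<^esub>], []) \<in> RF M1 M2"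
  unfolding RF_def by blast

lemma GA_Inl: "Inl x \<in> GA M1 M2 \<longleftrightarrow> x \<in> carrier M1" unfolding GA_def by auto
lemma GA_Inr: "Inr x \<in> GA M1 M2 \<longleftrightarrow> x \<in> carrier M2" unfolding GA_def by auto

definition NatAdd :: "nat monoid" where
  "NatAdd = \<lparr>carrier = UNIV, mult = (+), one = 0\<rparr>"

lemma NatAdd_simps [simp]: "carrier NatAdd = UNIV" "mult NatAdd = (+)" "one NatAdd = 0"
  by (simp_all add: NatAdd_def)

lemma NatAdd_monoid: "monoid NatAdd"
  by (rule monoidI) auto

lemma ev_NatAdd_Cons: "ev NatAdd \<phi> (a#w) = \<phi> a + ev NatAdd \<phi> w" by simp

lemma fp_left:
  fixes M1 :: "('a, 'e1) monoid_scheme" and M2 :: "('b, 'e2) monoid_scheme"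
  assumes M1: "monoid M1" and M2: "monoid M2" and hm2: "homogeneous_monoid M2"
    and fc: "FCRS (free_product M1 M2)"
  shows "FCRS M1"
proof -
  let ?A = "GA M1 M2" and ?R = "RF M1 M2"
  let ?P = "pres_monoid ?A ?R"
  obtain len :: "_ \<Rightarrow> nat" where ladd: "\<And>x y. x\<in>carrier M2 \<Longrightarrow> y\<in>carrier M2 \<Longrightarrow> len (x \<otimes>\<^bsub>M2\<^esub> y) = len x + len y"
    and l0: "\<And>x. x\<in>carrier M2 \<Longrightarrow> len x = 0 \<Longrightarrow> x = \<one>\<^bsub>M2\<^esub>"
    using homog_length[OF M2 hm2] by blast
  have len1: "len \<one>\<^bsub>M2\<^esub> = 0"
  proof -
    have "len (\<one>\<^bsub>M2\<^esub> \<otimes>\<^bsub>M2\<^esub> \<one>\<^bsub>M2\<^esub>) = len \<one>\<^bsub>M2\<^esub> + len \<one>\<^bsub>M2\<^esub>" using ladd monoid.one_closed[OF M2] by blast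
    then show ?thesis using monoid.l_one[OF M2 monoid.one_closed[OF M2]] by simp
  qed
  define lam :: "'a + 'b \<Rightarrow> 'a" where "lam x = (case x of Inl a \<Rightarrow> a | Inr _ \<Rightarrow> \<one>\<^bsub>M1\<^esub>)" for x
  define lamL :: "'a + 'b \<Rightarrow> nat" where "lamL x = (case x of Inl _ \<Rightarrow> 0 | Inr b \<Rightarrow> len b)" for x
  have lamf: "lam \<in> ?A \<rightarrow> carrier M1"
    unfolding lam_def GA_def using monoid.one_closed[OF M1] by auto
  have lamLf: "lamL \<in> ?A \<rightarrow> carrier NatAdd" by simp
  have resp: "\<forall>(l,r)\<in>?R. l \<in> lists ?A \<longrightarrow> r \<in> lists ?A \<longrightarrow> ev M1 lam l = ev M1 lam r"
  proof (intro ballI)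
    fix p assume "p \<in> ?R"
    obtain l r where p: "p = (l,r)" by (cases p)
    have "ev M1 lam l = ev M1 lam r" using \<open>p \<in> ?R\<close> unfolding p
    proof (cases rule: RF_cases)
      case (LL x y) then show ?thesis using M1 by (simp add: lam_def monoid.r_one monoid.m_closed)
    next
      case L1 then show ?thesis using M1 by (simp add: lam_def monoid.r_one)
    next
      case (RR x y) then show ?thesis using M1 by (simp add: lam_def monoid.r_one)
    next
      case R1 then show ?thesis using M1 by (simp add: lam_def monoid.r_one)
    qed
    then show "case p of (l,r) \<Rightarrow> l \<in> lists ?A \<longrightarrow> r \<in> lists ?A \<longrightarrow> ev M1 lam l = ev M1 lam r"
      unfolding p by simp
  qed
  have respL: "\<forall>(l,r)\<in>?R. l \<in> lists ?A \<longrightarrow> r \<in> lists ?A \<longrightarrow> ev NatAdd lamL l = ev NatAdd lamL r"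
  proof (intro ballI)
    fix p assume "p \<in> ?R"
    obtain l r where p: "p = (l,r)" by (cases p)
    have "ev NatAdd lamL l = ev NatAdd lamL r" using \<open>p \<in> ?R\<close> unfolding p
    proof (cases rule: RF_cases)
      case (LL x y) then show ?thesis by (simp add: lamL_def)
    next
      case L1 then show ?thesis by (simp add: lamL_def)
    next
      case (RR x y) then show ?thesis using ladd by (simp add: lamL_def)
    next
      case R1 then show ?thesis using len1 by (simp add: lamL_def)
    qed
    then show "case p of (l,r) \<Rightarrow> l \<in> lists ?A \<longrightarrow> r \<in> lists ?A \<longrightarrow> ev NatAdd lamL l = ev NatAdd lamL r"
      unfolding p by simp
  qed
  define rh where "rh = ind M1 lam"
  define L where "L = ind NatAdd lamL"
  define io where "io m = cls ?A ?R [Inl m]" for m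
  have rhhom: "rh \<in> hom ?P M1" unfolding rh_def by (rule ind_hom[OF M1 lamf resp])
  have rh1: "rh \<one>\<^bsub>?P\<^esub> = \<one>\<^bsub>M1\<^esub>" unfolding rh_def by (rule ind_one[OF M1 lamf resp])
  have Lhom: "L \<in> hom ?P NatAdd" unfolding L_def by (rule ind_hom[OF NatAdd_monoid lamLf respL])
  have Ladd: "L (x \<otimes>\<^bsub>?P\<^esub> y) = L x + L y" if "x \<in> carrier ?P" "y \<in> carrier ?P" for x y
    using Lhom that unfolding hom_def by simp
  have rhcls: "rh (cls ?A ?R w) = ev M1 lam w" if "w \<in> lists ?A" for w
    unfolding rh_def by (rule ind_cls[OF M1 lamf resp that])
  have Lcls: "L (cls ?A ?R w) = ev NatAdd lamL w" if "w \<in> lists ?A" for w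
    unfolding L_def by (rule ind_cls[OF NatAdd_monoid lamLf respL that])
  have iota: "io m \<in> carrier ?P \<and> rh (io m) = m \<and> L (io m) = 0" if m: "m \<in> carrier M1" for m
  proof -
    have w: "[Inl m] \<in> lists ?A" using m by (simp add: GA_Inl)
    show ?thesis unfolding io_def using cls_in_carrier[OF w] rhcls[OF w] Lcls[OF w] m
      by (simp add: lam_def lamL_def monoid.r_one[OF M1])
  qed
  have key: "(w, [Inl (ev M1 lam w)]) \<in> thue_cong ?A ?R" if "w \<in> lists ?A" "ev NatAdd lamL w = 0" for w
    using that
  proof (induction w rule: lists.induct)
    case Nil
    have "([Inl \<one>\<^bsub>M1\<^esub>], []) \<in> thue_cong ?A ?R"
      by (rule tc_rule[OF RF_L1]) (simp_all add: GA_Inl monoid.one_closed[OF M1])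
    then show ?case by (simp add: tc_sym)
  next
    case (Cons x w)
    have IH: "(w, [Inl (ev M1 lam w)]) \<in> thue_cong ?A ?R" using Cons by simp
    have ec: "ev M1 lam w \<in> carrier M1" using ev_closed[OF M1 lamf Cons.hyps(2)] .
    show ?case
    proof (cases x)
      case (Inl a)
      have a: "a \<in> carrier M1" using Cons.hyps(1) Inl by (simp add: GA_Inl)
      have "([Inl a] @ w, [Inl a] @ [Inl (ev M1 lam w)]) \<in> thue_cong ?A ?R"
        using tc_append[OF tc_refl[of "[Inl a]" ?A ?R] IH] a by (simp add: GA_Inl)
      then have "(Inl a # w, [Inl a, Inl (ev M1 lam w)]) \<in> thue_cong ?A ?R" by simp
      moreover have "([Inl a, Inl (ev M1 lam w)], [Inl (a \<otimes>\<^bsub>M1\<^esub> ev M1 lam w)]) \<in> thue_cong ?A ?R"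
        by (rule tc_rule[OF RF_LL[OF a ec]]) (simp_all add: GA_Inl a ec monoid.m_closed[OF M1])
      ultimately have "(Inl a # w, [Inl (a \<otimes>\<^bsub>M1\<^esub> ev M1 lam w)]) \<in> thue_cong ?A ?R" by (rule tc_trans)
      moreover have "lam (Inl a) = a" by (simp add: lam_def)
      ultimately show ?thesis using Inl by simp
    next
      case (Inr b)
      have b: "b \<in> carrier M2" using Cons.hyps(1) Inr by (simp add: GA_Inr)
      have "len b = 0" using Cons.prems Inr by (simp add: lamL_def)
      then have b1: "b = \<one>\<^bsub>M2\<^esub>" using l0 b by simp
      have "([Inr \<one>\<^bsub>M2\<^esub>], []) \<in> thue_cong ?A ?R"
        by (rule tc_rule[OF RF_R1]) (simp_all add: GA_Inr monoid.one_closed[OF M2])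
      then have "([Inr \<one>\<^bsub>M2\<^esub>] @ w, [] @ w) \<in> thue_cong ?A ?R"
        using tc_append tc_refl[OF Cons.hyps(2)] by blast
      then have "(Inr b # w, [Inl (ev M1 lam w)]) \<in> thue_cong ?A ?R" using IH b1 tc_trans by simp
      moreover have "lam (Inr b) = \<one>\<^bsub>M1\<^esub>" by (simp add: lam_def)
      ultimately show ?thesis using Inr ec by (simp add: monoid.l_one[OF M1])
    qed
  qed
  have bk: "X = io (rh X)" if X: "X \<in> carrier ?P" and LX: "L X = 0" for X
  proof -
    obtain w where w: "w \<in> lists ?A" "X = cls ?A ?R w" using X by (rule pres_carrierE)
    have "ev NatAdd lamL w = 0" using LX Lcls[OF w(1)] w(2) by simp
    then have k: "(w, [Inl (ev M1 lam w)]) \<in> thue_cong ?A ?R" using key w(1) by simp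
    have "io (rh X) = cls ?A ?R [Inl (ev M1 lam w)]" unfolding io_def using rhcls[OF w(1)] w(2) by simp
    also have "\<dots> = cls ?A ?R w" using cls_eq_iff k tc_lists tc_sym by metis
    finally show ?thesis using w(2) by simp
  qed
  have fcP: "FCRS ?P" using fc by (simp add: fp_def)
  show ?thesis
    by (rule restrict_FCRS[OF pres_monoid M1 fcP rhhom rh1 Ladd iota bk]) auto
qed

lemma fp_right:
  fixes M1 :: "('a, 'e1) monoid_scheme" and M2 :: "('b, 'e2) monoid_scheme"
  assumes M2: "monoid M2" and M1: "monoid M1" and hm2: "homogeneous_monoid M1"
    and fc: "FCRS (free_product M1 M2)"
  shows "FCRS M2"
proof -
  let ?A = "GA M1 M2" and ?R = "RF M1 M2"
  let ?P = "pres_monoid ?A ?R"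
  obtain len :: "_ \<Rightarrow> nat" where ladd: "\<And>x y. x\<in>carrier M1 \<Longrightarrow> y\<in>carrier M1 \<Longrightarrow> len (x \<otimes>\<^bsub>M1\<^esub> y) = len x + len y"
    and l0: "\<And>x. x\<in>carrier M1 \<Longrightarrow> len x = 0 \<Longrightarrow> x = \<one>\<^bsub>M1\<^esub>"
    using homog_length[OF M1 hm2] by blast
  have len1: "len \<one>\<^bsub>M1\<^esub> = 0"
  proof -
    have "len (\<one>\<^bsub>M1\<^esub> \<otimes>\<^bsub>M1\<^esub> \<one>\<^bsub>M1\<^esub>) = len \<one>\<^bsub>M1\<^esub> + len \<one>\<^bsub>M1\<^esub>" using ladd monoid.one_closed[OF M1] by blast
    then show ?thesis using monoid.l_one[OF M1 monoid.one_closed[OF M1]] by simp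
  qed
  define lam :: "'a + 'b \<Rightarrow> 'b" where "lam x = (case x of Inr a \<Rightarrow> a | Inl _ \<Rightarrow> \<one>\<^bsub>M2\<^esub>)" for x
  define lamL :: "'a + 'b \<Rightarrow> nat" where "lamL x = (case x of Inr _ \<Rightarrow> 0 | Inl b \<Rightarrow> len b)" for x
  have lamf: "lam \<in> ?A \<rightarrow> carrier M2"
    unfolding lam_def GA_def using monoid.one_closed[OF M2] by auto
  have lamLf: "lamL \<in> ?A \<rightarrow> carrier NatAdd" by simp
  have resp: "\<forall>(l,r)\<in>?R. l \<in> lists ?A \<longrightarrow> r \<in> lists ?A \<longrightarrow> ev M2 lam l = ev M2 lam r"
  proof (intro ballI)
    fix p assume "p \<in> ?R"
    obtain l r where p: "p = (l,r)" by (cases p)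
    have "ev M2 lam l = ev M2 lam r" using \<open>p \<in> ?R\<close> unfolding p
    proof (cases rule: RF_cases)
      case (RR x y) then show ?thesis using M2 by (simp add: lam_def monoid.r_one monoid.m_closed)
    next
      case R1 then show ?thesis using M2 by (simp add: lam_def monoid.r_one)
    next
      case (LL x y) then show ?thesis using M2 by (simp add: lam_def monoid.r_one)
    next
      case L1 then show ?thesis using M2 by (simp add: lam_def monoid.r_one)
    qed
    then show "case p of (l,r) \<Rightarrow> l \<in> lists ?A \<longrightarrow> r \<in> lists ?A \<longrightarrow> ev M2 lam l = ev M2 lam r"
      unfolding p by simp
  qed
  have respL: "\<forall>(l,r)\<in>?R. l \<in> lists ?A \<longrightarrow> r \<in> lists ?A \<longrightarrow> ev NatAdd lamL l = ev NatAdd lamL r"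
  proof (intro ballI)
    fix p assume "p \<in> ?R"
    obtain l r where p: "p = (l,r)" by (cases p)
    have "ev NatAdd lamL l = ev NatAdd lamL r" using \<open>p \<in> ?R\<close> unfolding p
    proof (cases rule: RF_cases)
      case (RR x y) then show ?thesis by (simp add: lamL_def)
    next
      case R1 then show ?thesis by (simp add: lamL_def)
    next
      case (LL x y) then show ?thesis using ladd by (simp add: lamL_def)
    next
      case L1 then show ?thesis using len1 by (simp add: lamL_def)
    qed
    then show "case p of (l,r) \<Rightarrow> l \<in> lists ?A \<longrightarrow> r \<in> lists ?A \<longrightarrow> ev NatAdd lamL l = ev NatAdd lamL r"
      unfolding p by simp
  qed
  define rh where "rh = ind M2 lam"
  define L where "L = ind NatAdd lamL"
  define io where "io m = cls ?A ?R [Inr m]" for m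
  have rhhom: "rh \<in> hom ?P M2" unfolding rh_def by (rule ind_hom[OF M2 lamf resp])
  have rh1: "rh \<one>\<^bsub>?P\<^esub> = \<one>\<^bsub>M2\<^esub>" unfolding rh_def by (rule ind_one[OF M2 lamf resp])
  have Lhom: "L \<in> hom ?P NatAdd" unfolding L_def by (rule ind_hom[OF NatAdd_monoid lamLf respL])
  have Ladd: "L (x \<otimes>\<^bsub>?P\<^esub> y) = L x + L y" if "x \<in> carrier ?P" "y \<in> carrier ?P" for x y
    using Lhom that unfolding hom_def by simp
  have rhcls: "rh (cls ?A ?R w) = ev M2 lam w" if "w \<in> lists ?A" for w
    unfolding rh_def by (rule ind_cls[OF M2 lamf resp that])
  have Lcls: "L (cls ?A ?R w) = ev NatAdd lamL w" if "w \<in> lists ?A" for w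
    unfolding L_def by (rule ind_cls[OF NatAdd_monoid lamLf respL that])
  have iota: "io m \<in> carrier ?P \<and> rh (io m) = m \<and> L (io m) = 0" if m: "m \<in> carrier M2" for m
  proof -
    have w: "[Inr m] \<in> lists ?A" using m by (simp add: GA_Inr)
    show ?thesis unfolding io_def using cls_in_carrier[OF w] rhcls[OF w] Lcls[OF w] m
      by (simp add: lam_def lamL_def monoid.r_one[OF M2])
  qed
  have key: "(w, [Inr (ev M2 lam w)]) \<in> thue_cong ?A ?R" if "w \<in> lists ?A" "ev NatAdd lamL w = 0" for w
    using that
  proof (induction w rule: lists.induct)
    case Nil
    have "([Inr \<one>\<^bsub>M2\<^esub>], []) \<in> thue_cong ?A ?R"
      by (rule tc_rule[OF RF_R1]) (simp_all add: GA_Inr monoid.one_closed[OF M2])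
    then show ?case by (simp add: tc_sym)
  next
    case (Cons x w)
    have IH: "(w, [Inr (ev M2 lam w)]) \<in> thue_cong ?A ?R" using Cons by simp
    have ec: "ev M2 lam w \<in> carrier M2" using ev_closed[OF M2 lamf Cons.hyps(2)] .
    show ?case
    proof (cases x)
      case (Inr a)
      have a: "a \<in> carrier M2" using Cons.hyps(1) Inr by (simp add: GA_Inr)
      have "([Inr a] @ w, [Inr a] @ [Inr (ev M2 lam w)]) \<in> thue_cong ?A ?R"
        using tc_append[OF tc_refl[of "[Inr a]" ?A ?R] IH] a by (simp add: GA_Inr)
      then have "(Inr a # w, [Inr a, Inr (ev M2 lam w)]) \<in> thue_cong ?A ?R" by simp
      moreover have "([Inr a, Inr (ev M2 lam w)], [Inr (a \<otimes>\<^bsub>M2\<^esub> ev M2 lam w)]) \<in> thue_cong ?A ?R"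
        by (rule tc_rule[OF RF_RR[OF a ec]]) (simp_all add: GA_Inr a ec monoid.m_closed[OF M2])
      ultimately have "(Inr a # w, [Inr (a \<otimes>\<^bsub>M2\<^esub> ev M2 lam w)]) \<in> thue_cong ?A ?R" by (rule tc_trans)
      moreover have "lam (Inr a) = a" by (simp add: lam_def)
      ultimately show ?thesis using Inr by simp
    next
      case (Inl b)
      have b: "b \<in> carrier M1" using Cons.hyps(1) Inl by (simp add: GA_Inl)
      have "len b = 0" using Cons.prems Inl by (simp add: lamL_def)
      then have b1: "b = \<one>\<^bsub>M1\<^esub>" using l0 b by simp
      have "([Inl \<one>\<^bsub>M1\<^esub>], []) \<in> thue_cong ?A ?R"
        by (rule tc_rule[OF RF_L1]) (simp_all add: GA_Inl monoid.one_closed[OF M1])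
      then have "([Inl \<one>\<^bsub>M1\<^esub>] @ w, [] @ w) \<in> thue_cong ?A ?R"
        using tc_append tc_refl[OF Cons.hyps(2)] by blast
      then have "(Inl b # w, [Inr (ev M2 lam w)]) \<in> thue_cong ?A ?R" using IH b1 tc_trans by simp
      moreover have "lam (Inl b) = \<one>\<^bsub>M2\<^esub>" by (simp add: lam_def)
      ultimately show ?thesis using Inl ec by (simp add: monoid.l_one[OF M2])
    qed
  qed
  have bk: "X = io (rh X)" if X: "X \<in> carrier ?P" and LX: "L X = 0" for X
  proof -
    obtain w where w: "w \<in> lists ?A" "X = cls ?A ?R w" using X by (rule pres_carrierE)
    have "ev NatAdd lamL w = 0" using LX Lcls[OF w(1)] w(2) by simp
    then have k: "(w, [Inr (ev M2 lam w)]) \<in> thue_cong ?A ?R" using key w(1) by simp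
    have "io (rh X) = cls ?A ?R [Inr (ev M2 lam w)]" unfolding io_def using rhcls[OF w(1)] w(2) by simp
    also have "\<dots> = cls ?A ?R w" using cls_eq_iff k tc_lists tc_sym by metis
    finally show ?thesis using w(2) by simp
  qed
  have fcP: "FCRS ?P" using fc by (simp add: fp_def)
  show ?thesis
    by (rule restrict_FCRS[OF pres_monoid M2 fcP rhhom rh1 Ladd iota bk]) auto
qed

definition enc :: "nat \<Rightarrow> nat \<Rightarrow> nat" where "enc i b = 2*b + i"

definition Bu :: "(nat \<Rightarrow> nat set) \<Rightarrow> nat set" where
  "Bu BB = {enc i b | i b. i < 2 \<and> b \<in> BB i}"

definition Su :: "(nat \<Rightarrow> (nat list \<times> nat list) set) \<Rightarrow> (nat list \<times> nat list) set" where
  "Su SS = {(map (enc i) l, map (enc i) r) | i l r. i < 2 \<and> (l,r) \<in> SS i}"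

lemma enc_mod [simp]: "i < 2 \<Longrightarrow> enc i b mod 2 = i" unfolding enc_def by simp
lemma enc_div [simp]: "i < 2 \<Longrightarrow> enc i b div 2 = b" unfolding enc_def by simp

lemma map_dec_enc [simp]: "i < 2 \<Longrightarrow> map (\<lambda>n. n div 2) (map (enc i) u) = u"
  by (induction u) simp_all

lemma enc_Bu: "i < 2 \<Longrightarrow> b \<in> BB i \<Longrightarrow> enc i b \<in> Bu BB"
  unfolding Bu_def by blast

lemma map_enc_lists: "i < 2 \<Longrightarrow> u \<in> lists (BB i) \<Longrightarrow> map (enc i) u \<in> lists (Bu BB)"
  by (induction u) (auto intro: enc_Bu)

lemma Su_lists:
  assumes "\<And>i. i < 2 \<Longrightarrow> SS i \<subseteq> lists (BB i) \<times> lists (BB i)"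
  shows "Su SS \<subseteq> lists (Bu BB) \<times> lists (Bu BB)"
proof
  fix p assume "p \<in> Su SS"
  then obtain i l r where h: "p = (map (enc i) l, map (enc i) r)" "i < 2" "(l,r) \<in> SS i"
    unfolding Su_def by blast
  have "l \<in> lists (BB i)" "r \<in> lists (BB i)" using assms[OF h(2)] h(3) by auto
  then show "p \<in> lists (Bu BB) \<times> lists (Bu BB)" using h map_enc_lists by (simp add: mem_Times_iff)
qed

lemma Su_I: "i < 2 \<Longrightarrow> (l,r) \<in> SS i \<Longrightarrow> (map (enc i) l, map (enc i) r) \<in> Su SS"
  unfolding Su_def by blast

lemma rstep_enc:
  assumes "i < 2" "(a,b) \<in> rstep (BB i) (SS i)"
  shows "(map (enc i) a, map (enc i) b) \<in> rstep (Bu BB) (Su SS)"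
proof -
  from assms(2) obtain x l r y where h: "a = x@l@y" "b = x@r@y" "(l,r)\<in>SS i" "x \<in> lists (BB i)" "y\<in>lists (BB i)"
      "l \<in> lists (BB i)" "r \<in> lists (BB i)" unfolding rstep_def by blast
  have "(map (enc i) x @ map (enc i) l @ map (enc i) y, map (enc i) x @ map (enc i) r @ map (enc i) y) \<in> rstep (Bu BB) (Su SS)"
    by (rule rstepI[OF Su_I[of i l r SS, OF assms(1) h(3)]]) (use map_enc_lists[OF assms(1)] h in auto)
  then show ?thesis using h by simp
qed

lemma rtrancl_enc:
  assumes "i < 2" "(a,b) \<in> (rstep (BB i) (SS i))\<^sup>*"
  shows "(map (enc i) a, map (enc i) b) \<in> (rstep (Bu BB) (Su SS))\<^sup>*"
  using assms(2)
proof (induction rule: rtrancl_induct)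
  case base then show ?case by simp
next
  case (step y z)
  then show ?case using rstep_enc[where BB=BB and SS=SS, OF assms(1) step(2)] by (meson rtrancl.rtrancl_into_rtrancl)
qed

lemma tc_enc:
  assumes "i < 2" "(a,b) \<in> thue_cong (BB i) (SS i)"
  shows "(map (enc i) a, map (enc i) b) \<in> thue_cong (Bu BB) (Su SS)"
proof -
  let ?r = "rstep (BB i) (SS i)" and ?r' = "rstep (Bu BB) (Su SS)" and ?m = "map (enc i)"
  have "(?m a, ?m b) \<in> (?r' \<union> ?r'\<inverse>)\<^sup>+" if "(a,b) \<in> (?r \<union> ?r\<inverse>)\<^sup>+" for a b
    using that
  proof (induction rule: trancl_induct)
    case (base y)
    then have "(?m a, ?m y) \<in> ?r' \<union> ?r'\<inverse>" using rstep_enc[where BB=BB and SS=SS, OF assms(1)] by blast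
    then show ?case by (rule r_into_trancl)
  next
    case (step y z)
    then have "(?m y, ?m z) \<in> ?r' \<union> ?r'\<inverse>" using rstep_enc[where BB=BB and SS=SS, OF assms(1)] by blast
    then show ?case using step.IH by (meson trancl.trancl_into_trancl)
  qed
  moreover have "?m a \<in> lists (Bu BB)" if "a \<in> lists (BB i)" for a using map_enc_lists[where BB=BB, OF assms(1) that] .
  ultimately show ?thesis using assms(2) unfolding thue_cong_def Id_on_def by auto
qed

lemma rtrancl_ctx:
  assumes "(a,b) \<in> (rstep A R)\<^sup>*" "p \<in> lists A" "q \<in> lists A"
  shows "(p@a@q, p@b@q) \<in> (rstep A R)\<^sup>*"
  using assms(1)
proof (induction rule: rtrancl_induct)
  case base then show ?case by simp
next
  case (step y z)
  then show ?case using rstep_ctx[OF step(2) assms(2,3)] by (meson rtrancl.rtrancl_into_rtrancl)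
qed

lemma newman:
  assumes wf: "wf (r\<inverse>)"
    and lc: "\<And>a b c. (a,b) \<in> r \<Longrightarrow> (a,c) \<in> r \<Longrightarrow> \<exists>d. (b,d) \<in> r\<^sup>* \<and> (c,d) \<in> r\<^sup>*"
  shows "(a,b) \<in> r\<^sup>* \<Longrightarrow> (a,c) \<in> r\<^sup>* \<Longrightarrow> \<exists>d. (b,d) \<in> r\<^sup>* \<and> (c,d) \<in> r\<^sup>*"
proof (induction a arbitrary: b c rule: wf_induct_rule[OF wf])
  case (1 a)
  show ?case
  proof (cases "a = b")
    case True then show ?thesis using "1.prems"(2) by blast
  next
    case False
    show ?thesis
    proof (cases "a = c")
      case True then show ?thesis using "1.prems"(1) by blast
    next
      case False2: False
      obtain b1 where b1: "(a,b1) \<in> r" "(b1,b) \<in> r\<^sup>*" using "1.prems"(1) False by (meson converse_rtranclE)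
      obtain c1 where c1: "(a,c1) \<in> r" "(c1,c) \<in> r\<^sup>*" using "1.prems"(2) False2 by (meson converse_rtranclE)
      obtain d where d: "(b1,d) \<in> r\<^sup>*" "(c1,d) \<in> r\<^sup>*" using lc[OF b1(1) c1(1)] by blast
      obtain e where e: "(b,e) \<in> r\<^sup>*" "(d,e) \<in> r\<^sup>*" using "1.IH"[of b1 b d] b1 d by blast
      have "(c1,e) \<in> r\<^sup>*" using d(2) e(2) by (rule rtrancl_trans)
      then obtain g where g: "(c,g) \<in> r\<^sup>*" "(e,g) \<in> r\<^sup>*" using "1.IH"[of c1 c e] c1 by blast
      have "(b,g) \<in> r\<^sup>*" using e(1) g(2) by (rule rtrancl_trans)
      then show ?thesis using g(1) by blast
    qed
  qed
qed

lemma lhs_nonempty: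
  assumes "noetherian B S" "(l,r) \<in> S" "l \<in> lists B" "r \<in> lists B"
  shows "l \<noteq> []"
proof
  assume l: "l = []"
  define f where "f n = concat (replicate n r)" for n
  have fl: "f n \<in> lists B" for n unfolding f_def using assms(4) by (induction n) auto
  have "(f n, f (Suc n)) \<in> rstep B S" for n
    using rstepI[OF assms(2), of "[]" B "f n"] fl assms(3,4) l unfolding f_def by simp
  then have "\<forall>n. (f (Suc n), f n) \<in> (rstep B S)\<inverse>" by simp
  then show False using assms(1) unfolding noetherian_def wf_iff_no_infinite_down_chain by blast
qed

lemma decode:
  assumes "i < 2" "\<forall>n\<in>set X. n \<in> enc i ` BB i"
  shows "X = map (enc i) (map (\<lambda>n. n div 2) X) \<and> map (\<lambda>n. n div 2) X \<in> lists (BB i)"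
  using assms(2)
proof (induction X)
  case Nil then show ?case by simp
next
  case (Cons n X)
  then obtain b where b: "n = enc i b" "b \<in> BB i" by auto
  then show ?case using Cons assms(1) by simp
qed

lemma dec_o_enc [simp]: "i < 2 \<Longrightarrow> (\<lambda>n. n div 2) \<circ> enc i = (\<lambda>x. x)"
  by (rule ext) simp

lemma rtrancl_app_right: "(a,b) \<in> (rstep A R)\<^sup>* \<Longrightarrow> q \<in> lists A \<Longrightarrow> (a@q, b@q) \<in> (rstep A R)\<^sup>*"
  using rtrancl_ctx[of a b A R "[]" q] by simp

lemma rtrancl_app_left: "(a,b) \<in> (rstep A R)\<^sup>* \<Longrightarrow> p \<in> lists A \<Longrightarrow> (p@a, p@b) \<in> (rstep A R)\<^sup>*"
  using rtrancl_ctx[of a b A R p "[]"] by simp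

lemma filter_enc: "i < 2 \<Longrightarrow> filter (\<lambda>n. n mod 2 = j) (map (enc i) l) = (if j = i then map (enc i) l else [])"
  by (induction l) auto

context
  fixes BB :: "nat \<Rightarrow> nat set" and SS :: "nat \<Rightarrow> (nat list \<times> nat list) set"
  assumes sys: "\<And>i. i < 2 \<Longrightarrow> SS i \<subseteq> lists (BB i) \<times> lists (BB i)"
    and comp: "\<And>i. i < 2 \<Longrightarrow> complete_rs (BB i) (SS i)"
begin

lemma SuE:
  assumes "(L,R) \<in> Su SS"
  obtains i l r where "i < 2" "(l,r) \<in> SS i" "L = map (enc i) l" "R = map (enc i) r"
    "l \<in> lists (BB i)" "r \<in> lists (BB i)"
proof -
  obtain i l r where h: "i < 2" "(l,r) \<in> SS i" "L = map (enc i) l" "R = map (enc i) r"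
    using assms unfolding Su_def by blast
  moreover have "l \<in> lists (BB i)" "r \<in> lists (BB i)" using sys[OF h(1)] h(2) by auto
  ultimately show ?thesis using that by blast
qed

lemma Su_nonempty: "(L,R) \<in> Su SS \<Longrightarrow> L \<noteq> []"
proof -
  assume "(L,R) \<in> Su SS"
  then obtain i l r where h: "i < 2" "(l,r) \<in> SS i" "L = map (enc i) l" "l \<in> lists (BB i)" "r \<in> lists (BB i)"
    by (rule SuE)
  have "noetherian (BB i) (SS i)" using comp[OF h(1)] unfolding complete_rs_def by simp
  then have "l \<noteq> []" using lhs_nonempty h(2,4,5) by blast
  then show "L \<noteq> []" using h(3) by simp
qed

lemma Su_rhs: "(L,R) \<in> Su SS \<Longrightarrow> L \<in> lists (Bu BB) \<and> R \<in> lists (Bu BB)"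
  using Su_lists[of SS BB, OF sys] by (auto simp: mem_Times_iff)

lemma overlap:
  assumes Z1: "Z = u1@L1@v1" and Z2: "Z = u2@L2@v2"
    and r1: "(L1,R1) \<in> Su SS" and r2: "(L2,R2) \<in> Su SS"
    and sub: "set Z \<subseteq> set L1 \<union> set L2" and common: "set L1 \<inter> set L2 \<noteq> {}"
  shows "\<exists>Z'. (u1@R1@v1, Z') \<in> (rstep (Bu BB) (Su SS))\<^sup>* \<and> (u2@R2@v2, Z') \<in> (rstep (Bu BB) (Su SS))\<^sup>*"
proof -
  obtain i l1 r1' where h1: "i < 2" "(l1,r1') \<in> SS i" "L1 = map (enc i) l1" "R1 = map (enc i) r1'"
    "l1 \<in> lists (BB i)" "r1' \<in> lists (BB i)" using r1 by (rule SuE)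
  obtain j l2 r2' where h2: "j < 2" "(l2,r2') \<in> SS j" "L2 = map (enc j) l2" "R2 = map (enc j) r2'"
    "l2 \<in> lists (BB j)" "r2' \<in> lists (BB j)" using r2 by (rule SuE)
  obtain n where n: "n \<in> set L1" "n \<in> set L2" using common by blast
  have "n mod 2 = i" using n(1) h1(1,3) by auto
  moreover have "n mod 2 = j" using n(2) h2(1,3) by auto
  ultimately have ij: "j = i" by simp
  have letters: "\<forall>m\<in>set Z. m \<in> enc i ` BB i"
  proof
    fix m assume "m \<in> set Z"
    then have "m \<in> set L1 \<or> m \<in> set L2" using sub by blast
    then show "m \<in> enc i ` BB i" using h1(3,5) h2(3,5) ij by auto
  qed
  let ?d = "map (\<lambda>n. n div 2)"
  have dec: "X = map (enc i) (?d X) \<and> ?d X \<in> lists (BB i)" if "set X \<subseteq> set Z" for X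
    using decode[OF h1(1), of X BB] letters that by blast
  have u1: "u1 = map (enc i) (?d u1)" "?d u1 \<in> lists (BB i)" using dec[of u1] Z1 by auto
  have v1: "v1 = map (enc i) (?d v1)" "?d v1 \<in> lists (BB i)" using dec[of v1] Z1 by auto
  have u2: "u2 = map (enc i) (?d u2)" "?d u2 \<in> lists (BB i)" using dec[of u2] Z2 by auto
  have v2: "v2 = map (enc i) (?d v2)" "?d v2 \<in> lists (BB i)" using dec[of v2] Z2 by auto
  have z01: "?d Z = ?d u1 @ l1 @ ?d v1" using Z1 h1(1,3) by simp
  have z02: "?d Z = ?d u2 @ l2 @ ?d v2" using Z2 h2(1,3) ij by simp
  have s1: "(?d Z, ?d u1 @ r1' @ ?d v1) \<in> rstep (BB i) (SS i)"
    unfolding z01 by (rule rstepI[OF h1(2) u1(2) v1(2) h1(5,6)])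
  have h2': "(l2,r2') \<in> SS i" "l2 \<in> lists (BB i)" "r2' \<in> lists (BB i)" using h2 ij by auto
  have s2: "(?d Z, ?d u2 @ r2' @ ?d v2) \<in> rstep (BB i) (SS i)"
    unfolding z02 by (rule rstepI[OF h2'(1) u2(2) v2(2) h2'(2,3)])
  have "confluent (BB i) (SS i)" using comp[OF h1(1)] unfolding complete_rs_def by simp
  then obtain z' where z': "(?d u1 @ r1' @ ?d v1, z') \<in> (rstep (BB i) (SS i))\<^sup>*"
    "(?d u2 @ r2' @ ?d v2, z') \<in> (rstep (BB i) (SS i))\<^sup>*"
    using s1 s2 unfolding confluent_def by blast
  have e1: "map (enc i) (?d u1 @ r1' @ ?d v1) = u1@R1@v1" using u1(1) v1(1) h1(4) by simp
  have e2: "map (enc i) (?d u2 @ r2' @ ?d v2) = u2@R2@v2" using u2(1) v2(1) h2(4) ij by simp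
  show ?thesis
    using rtrancl_enc[where BB=BB and SS=SS, OF h1(1) z'(1)] rtrancl_enc[where BB=BB and SS=SS, OF h1(1) z'(2)]
    unfolding e1 e2 by blast
qed

lemma disjoint_join:
  assumes "(L1,R1) \<in> Su SS" "(L2,R2) \<in> Su SS" "vs \<in> lists (Bu BB)" "y2 \<in> lists (Bu BB)"
  shows "\<exists>z. (R1@vs@L2@y2, z) \<in> (rstep (Bu BB) (Su SS))\<^sup>* \<and> (L1@vs@R2@y2, z) \<in> (rstep (Bu BB) (Su SS))\<^sup>*"
proof -
  have m: "L1 \<in> lists (Bu BB)" "R1 \<in> lists (Bu BB)" "L2 \<in> lists (Bu BB)" "R2 \<in> lists (Bu BB)"
    using Su_rhs assms(1,2) by auto
  have "((R1@vs)@L2@y2, (R1@vs)@R2@y2) \<in> rstep (Bu BB) (Su SS)"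
    by (rule rstepI[OF assms(2)]) (use m assms(3,4) in simp_all)
  moreover have "([]@L1@(vs@R2@y2), []@R1@(vs@R2@y2)) \<in> rstep (Bu BB) (Su SS)"
    by (rule rstepI[OF assms(1)]) (use m assms(3,4) in simp_all)
  ultimately show ?thesis by (intro exI[of _ "R1@vs@R2@y2"]) auto
qed

lemma core:
  assumes W: "L1@y1 = us@L2@y2" and r1: "(L1,R1) \<in> Su SS" and r2: "(L2,R2) \<in> Su SS"
    and mem: "L1@y1 \<in> lists (Bu BB)"
  shows "\<exists>z. (R1@y1, z) \<in> (rstep (Bu BB) (Su SS))\<^sup>* \<and> (us@R2@y2, z) \<in> (rstep (Bu BB) (Su SS))\<^sup>*"
proof -
  let ?r = "rstep (Bu BB) (Su SS)"
  have ne1: "L1 \<noteq> []" using Su_nonempty r1 .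
  have ne2: "L2 \<noteq> []" using Su_nonempty r2 .
  have mR: "R1 \<in> lists (Bu BB)" "R2 \<in> lists (Bu BB)" using Su_rhs r1 r2 by auto
  have mem2: "us@L2@y2 \<in> lists (Bu BB)" using mem W by simp
  have my1: "y1 \<in> lists (Bu BB)" using mem by simp
  have mus: "us \<in> lists (Bu BB)" "y2 \<in> lists (Bu BB)" using mem2 by auto
  obtain vs where vs: "(L1 = us@vs \<and> vs@y1 = L2@y2) \<or> (L1@vs = us \<and> y1 = vs@L2@y2)"
    using W append_eq_append_conv2[of L1 y1 us "L2@y2"] by blast
  show ?thesis
  proof (cases "L1@vs = us \<and> y1 = vs@L2@y2")
    case True
    have vsm: "vs \<in> lists (Bu BB)" using my1 True by simp
    obtain z where z: "(R1@vs@L2@y2, z) \<in> ?r\<^sup>*" "(L1@vs@R2@y2, z) \<in> ?r\<^sup>*"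
      using disjoint_join[OF r1 r2 vsm mus(2)] by blast
    have e: "y1 = vs@L2@y2" "us = L1@vs" using True by auto
    show ?thesis using z unfolding e by auto
  next
    case False
    then have A: "L1 = us@vs" "vs@y1 = L2@y2" using vs by auto
    show ?thesis
    proof (cases "vs = []")
      case True
      then have e: "us = L1" "y1 = L2@y2" using A by auto
      obtain z where z: "(R1@[]@L2@y2, z) \<in> ?r\<^sup>*" "(L1@[]@R2@y2, z) \<in> ?r\<^sup>*"
        using disjoint_join[OF r1 r2 _ mus(2), of "[]"] by auto
      show ?thesis using z unfolding e by auto
    next
      case vsne: False
      obtain ws where ws: "(vs = L2@ws \<and> ws@y1 = y2) \<or> (vs@ws = L2 \<and> y1 = ws@y2)"
        using A(2) append_eq_append_conv2[of vs y1 L2 y2] by blast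
      show ?thesis
      proof (cases "vs = L2@ws \<and> ws@y1 = y2")
        case True
        have Z1: "L1 = []@L1@[]" by simp
        have Z2: "L1 = us@L2@ws" using A(1) True by simp
        have "set L1 \<subseteq> set L1 \<union> set L2" by blast
        moreover have "set L1 \<inter> set L2 \<noteq> {}" using Z2 ne2 by (cases L2) auto
        ultimately obtain Z' where Z': "([]@R1@[], Z') \<in> ?r\<^sup>*" "(us@R2@ws, Z') \<in> ?r\<^sup>*"
          using overlap[OF Z1 Z2 r1 r2] by blast
        have "(R1@y1, Z'@y1) \<in> ?r\<^sup>*" using rtrancl_app_right[OF _ my1] Z'(1) by simp
        moreover have "(us@R2@y2, Z'@y1) \<in> ?r\<^sup>*" using rtrancl_app_right[OF Z'(2) my1] True by simp
        ultimately show ?thesis by blast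
      next
        case False
        then have B: "vs@ws = L2" "y1 = ws@y2" using ws by auto
        have Z1: "L1@ws = []@L1@ws" by simp
        have Z2: "L1@ws = us@L2@[]" using A(1) B(1) by simp
        have "set (L1@ws) \<subseteq> set L1 \<union> set L2" using B(1) by auto
        moreover have "set L1 \<inter> set L2 \<noteq> {}" using A(1) B(1) vsne by (cases vs) auto
        ultimately obtain Z' where Z': "([]@R1@ws, Z') \<in> ?r\<^sup>*" "(us@R2@[], Z') \<in> ?r\<^sup>*"
          using overlap[OF Z1 Z2 r1 r2] by blast
        have "(R1@y1, Z'@y2) \<in> ?r\<^sup>*" using rtrancl_app_right[OF Z'(1) mus(2)] B(2) by simp
        moreover have "(us@R2@y2, Z'@y2) \<in> ?r\<^sup>*" using rtrancl_app_right[OF Z'(2) mus(2)] by simp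
        ultimately show ?thesis by blast
      qed
    qed
  qed
qed

lemma local_conf:
  assumes "(w,w1) \<in> rstep (Bu BB) (Su SS)" "(w,w2) \<in> rstep (Bu BB) (Su SS)"
  shows "\<exists>d. (w1,d) \<in> (rstep (Bu BB) (Su SS))\<^sup>* \<and> (w2,d) \<in> (rstep (Bu BB) (Su SS))\<^sup>*"
proof -
  let ?r = "rstep (Bu BB) (Su SS)"
  from assms(1) obtain x1 L1 R1 y1 where h1: "w = x1@L1@y1" "w1 = x1@R1@y1" "(L1,R1)\<in>Su SS"
    "x1 \<in> lists (Bu BB)" "y1\<in>lists (Bu BB)" "L1 \<in> lists (Bu BB)" "R1 \<in> lists (Bu BB)"
    unfolding rstep_def by blast
  from assms(2) obtain x2 L2 R2 y2 where h2: "w = x2@L2@y2" "w2 = x2@R2@y2" "(L2,R2)\<in>Su SS"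
    "x2 \<in> lists (Bu BB)" "y2\<in>lists (Bu BB)" "L2 \<in> lists (Bu BB)" "R2 \<in> lists (Bu BB)"
    unfolding rstep_def by blast
  have "x1@(L1@y1) = x2@(L2@y2)" using h1(1) h2(1) by simp
  then obtain us where us: "(x1 = x2@us \<and> us@L1@y1 = L2@y2) \<or> (x1@us = x2 \<and> L1@y1 = us@L2@y2)"
    using append_eq_append_conv2 by blast
  show ?thesis
  proof (cases "x1@us = x2 \<and> L1@y1 = us@L2@y2")
    case True
    obtain z where z: "(R1@y1, z) \<in> ?r\<^sup>*" "(us@R2@y2, z) \<in> ?r\<^sup>*"
      using core[OF conjunct2[OF True] h1(3) h2(3)] h1(5,6) by auto
    have "(w1, x1@z) \<in> ?r\<^sup>*" using rtrancl_app_left[OF z(1) h1(4)] h1(2) by simp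
    moreover have "(w2, x1@z) \<in> ?r\<^sup>*" using rtrancl_app_left[OF z(2) h1(4)] h2(2) True by auto
    ultimately show ?thesis by blast
  next
    case False
    then have T: "x1 = x2@us" "us@L1@y1 = L2@y2" using us by auto
    obtain z where z: "(R2@y2, z) \<in> ?r\<^sup>*" "(us@R1@y1, z) \<in> ?r\<^sup>*"
      using core[OF T(2)[symmetric] h2(3) h1(3)] h2(5,6) by auto
    have "(w2, x2@z) \<in> ?r\<^sup>*" using rtrancl_app_left[OF z(1) h2(4)] h2(2) by simp
    moreover have "(w1, x2@z) \<in> ?r\<^sup>*" using rtrancl_app_left[OF z(2) h2(4)] h1(2) T(1) by auto
    ultimately show ?thesis by blast
  qed
qed

end

definition proj :: "nat \<Rightarrow> nat list \<Rightarrow> nat list" where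
  "proj i w = map (\<lambda>n. n div 2) (filter (\<lambda>n. n mod 2 = i) w)"

lemma proj_append [simp]: "proj i (u@v) = proj i u @ proj i v"
  unfolding proj_def by simp

lemma proj_enc: "i < 2 \<Longrightarrow> proj j (map (enc i) l) = (if j = i then l else [])"
  unfolding proj_def using filter_enc[of i j l] by simp

lemma proj_lists: "x \<in> lists (Bu BB) \<Longrightarrow> i < 2 \<Longrightarrow> proj i x \<in> lists (BB i)"
proof (induction x)
  case Nil then show ?case by (simp add: proj_def)
next
  case (Cons n x)
  have "n \<in> Bu BB" using Cons.prems by simp
  then obtain k b where kb: "n = enc k b" "k < 2" "b \<in> BB k" unfolding Bu_def by blast
  have "proj i [n] \<in> lists (BB i)"
    using kb Cons.prems(2) by (auto simp: proj_def)
  moreover have "proj i x \<in> lists (BB i)" using Cons by simp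
  ultimately show ?case using proj_append[of i "[n]" x] by simp
qed

context
  fixes BB :: "nat \<Rightarrow> nat set" and SS :: "nat \<Rightarrow> (nat list \<times> nat list) set"
  assumes sys: "\<And>i. i < 2 \<Longrightarrow> SS i \<subseteq> lists (BB i) \<times> lists (BB i)"
    and comp: "\<And>i. i < 2 \<Longrightarrow> complete_rs (BB i) (SS i)"
begin

lemma proj_step:
  assumes "(w,w') \<in> rstep (Bu BB) (Su SS)"
  shows "(proj 0 w, proj 0 w') \<in> rstep (BB 0) (SS 0) \<and> proj 1 w = proj 1 w'
       \<or> proj 0 w = proj 0 w' \<and> (proj 1 w, proj 1 w') \<in> rstep (BB 1) (SS 1)"
proof -
  from assms obtain x L R y where h: "w = x@L@y" "w' = x@R@y" "(L,R)\<in>Su SS"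
    "x \<in> lists (Bu BB)" "y\<in>lists (Bu BB)" unfolding rstep_def by blast
  obtain i l r where s: "i < 2" "(l,r) \<in> SS i" "L = map (enc i) l" "R = map (enc i) r"
    "l \<in> lists (BB i)" "r \<in> lists (BB i)" using SuE[OF sys comp h(3)] by metis
  have px: "proj i x \<in> lists (BB i)" "proj i y \<in> lists (BB i)" using proj_lists h(4,5) s(1) by auto
  have st: "(proj i w, proj i w') \<in> rstep (BB i) (SS i)"
    using rstepI[OF s(2) px s(5,6)] h(1,2) s(1,3,4) proj_enc by simp
  have eq: "proj j w = proj j w'" if "j \<noteq> i" for j
    using h(1,2) s(1,3,4) proj_enc that by simp
  show ?thesis
  proof (cases "i = 0")
    case True then show ?thesis using st eq[of 1] by simp
  next
    case False then have "i = 1" using s(1) by simp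
    then show ?thesis using st eq[of 0] by simp
  qed
qed

lemma union_noeth: "noetherian (Bu BB) (Su SS)"
proof -
  let ?R0 = "(rstep (BB 0) (SS 0))\<inverse>" and ?R1 = "(rstep (BB 1) (SS 1))\<inverse>"
  have w0: "wf ?R0" using comp[of 0] unfolding complete_rs_def noetherian_def by simp
  have w1: "wf ?R1" using comp[of 1] unfolding complete_rs_def noetherian_def by simp
  have "wf (inv_image (?R0 <*lex*> ?R1) (\<lambda>w. (proj 0 w, proj 1 w)))"
    using w0 w1 by (intro wf_inv_image wf_lex_prod)
  moreover have "(rstep (Bu BB) (Su SS))\<inverse> \<subseteq> inv_image (?R0 <*lex*> ?R1) (\<lambda>w. (proj 0 w, proj 1 w))"
  proof
    fix p assume "p \<in> (rstep (Bu BB) (Su SS))\<inverse>"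
    then obtain w' w where p: "p = (w',w)" "(w,w') \<in> rstep (Bu BB) (Su SS)" by auto
    show "p \<in> inv_image (?R0 <*lex*> ?R1) (\<lambda>w. (proj 0 w, proj 1 w))"
      using proj_step[OF p(2)] unfolding p(1) by auto
  qed
  ultimately show ?thesis unfolding noetherian_def by (rule wf_subset)
qed

lemma union_complete: "complete_rs (Bu BB) (Su SS)"
proof -
  have nt: "noetherian (Bu BB) (Su SS)" by (rule union_noeth)
  have "confluent (Bu BB) (Su SS)"
    unfolding confluent_def
  proof (intro allI impI)
    fix w u v assume h: "(w,u) \<in> (rstep (Bu BB) (Su SS))\<^sup>* \<and> (w,v) \<in> (rstep (Bu BB) (Su SS))\<^sup>*"
    show "\<exists>z. (u,z) \<in> (rstep (Bu BB) (Su SS))\<^sup>* \<and> (v,z) \<in> (rstep (Bu BB) (Su SS))\<^sup>*"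
    proof -
      have lc: "\<exists>d. (b,d) \<in> (rstep (Bu BB) (Su SS))\<^sup>* \<and> (c,d) \<in> (rstep (Bu BB) (Su SS))\<^sup>*"
        if "(a,b) \<in> rstep (Bu BB) (Su SS)" "(a,c) \<in> rstep (Bu BB) (Su SS)" for a b c
        using local_conf[OF sys comp that] .
      have wfr: "wf ((rstep (Bu BB) (Su SS))\<inverse>)" using nt unfolding noetherian_def .
      have h1: "(w,u) \<in> (rstep (Bu BB) (Su SS))\<^sup>*" and h2: "(w,v) \<in> (rstep (Bu BB) (Su SS))\<^sup>*" using h by auto
      show ?thesis by (rule newman[OF wfr _ h1 h2]) (rule lc)
    qed
  qed
  then show ?thesis using nt unfolding complete_rs_def by simp
qed

end

lemma fp_union:
  fixes M1 :: "('a, 'e1) monoid_scheme" and M2 :: "('b, 'e2) monoid_scheme"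
  assumes M1: "monoid M1" and M2: "monoid M2" and fc1: "FCRS M1" and fc2: "FCRS M2"
  shows "FCRS (free_product M1 M2)"
proof -
  let ?A = "GA M1 M2" and ?R = "RF M1 M2"
  let ?P = "pres_monoid ?A ?R"
  have P: "monoid ?P" by (rule pres_monoid)
  obtain B1 :: "nat set" and S1 f1 where h1: "finite B1" "finite S1" "S1 \<subseteq> lists B1 \<times> lists B1" "complete_rs B1 S1"
    and pd1: "pdata M1 B1 S1 f1" using fc1 unfolding FCRS_iff[OF M1] by blast
  obtain B2 :: "nat set" and S2 f2 where h2: "finite B2" "finite S2" "S2 \<subseteq> lists B2 \<times> lists B2" "complete_rs B2 S2"
    and pd2: "pdata M2 B2 S2 f2" using fc2 unfolding FCRS_iff[OF M2] by blast
  define BB where "BB i = (if i = 0 then B1 else B2)" for i :: nat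
  define SS where "SS i = (if i = 0 then S1 else S2)" for i :: nat
  have BB0: "BB 0 = B1" and BB1: "BB 1 = B2" and SS0: "SS 0 = S1" and SS1: "SS 1 = S2"
    unfolding BB_def SS_def by simp_all
  have sys: "SS i \<subseteq> lists (BB i) \<times> lists (BB i)" if "i < 2" for i
    using h1(3) h2(3) unfolding BB_def SS_def by auto
  have comp: "complete_rs (BB i) (SS i)" if "i < 2" for i
    using h1(4) h2(4) unfolding BB_def SS_def by auto
  define B where "B = Bu BB"
  define S where "S = Su SS"
  let ?Q = "pres_monoid B S"
  have Q: "monoid ?Q" by (rule pres_monoid)
  have lt: "i < 2 \<Longrightarrow> i = 0 \<or> i = 1" for i :: nat by auto
  have finB: "finite B"
  proof -
    have "B \<subseteq> enc 0 ` B1 \<union> enc 1 ` B2" unfolding B_def Bu_def BB_def using lt by fastforce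
    then show ?thesis using h1(1) h2(1) finite_subset by blast
  qed
  have finS: "finite S"
  proof -
    let ?g0 = "\<lambda>p. (map (enc 0) (fst p), map (enc 0) (snd p))" and ?g1 = "\<lambda>p. (map (enc 1) (fst p), map (enc 1) (snd p))"
    have "S \<subseteq> ?g0 ` S1 \<union> ?g1 ` S2"
    proof
      fix p assume "p \<in> S"
      then obtain i l r where p: "p = (map (enc i) l, map (enc i) r)" "i < 2" "(l,r) \<in> SS i"
        unfolding S_def Su_def by blast
      show "p \<in> ?g0 ` S1 \<union> ?g1 ` S2"
      proof (cases "i = 0")
        case True then show ?thesis using p SS0 by (auto intro!: image_eqI[where x="(l,r)"])
      next
        case False then have "i = 1" using p(2) by simp
        then show ?thesis using p SS1 by (auto intro!: image_eqI[where x="(l,r)"])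
      qed
    qed
    then show ?thesis using h1(2) h2(2) finite_subset by blast
  qed
  have Slists: "S \<subseteq> lists B \<times> lists B" unfolding S_def B_def by (rule Su_lists[OF sys])
  have compS: "complete_rs B S" unfolding S_def B_def by (rule union_complete[OF sys comp])
  define io1 where "io1 m = cls ?A ?R [Inl m]" for m
  define io2 where "io2 m = cls ?A ?R [Inr m]" for m
  have io1c: "io1 m \<in> carrier ?P" if "m \<in> carrier M1" for m
    unfolding io1_def by (rule cls_in_carrier) (simp add: GA_Inl that)
  have io2c: "io2 m \<in> carrier ?P" if "m \<in> carrier M2" for m
    unfolding io2_def by (rule cls_in_carrier) (simp add: GA_Inr that)
  have io1m: "io1 (x \<otimes>\<^bsub>M1\<^esub> y) = io1 x \<otimes>\<^bsub>?P\<^esub> io1 y" if "x \<in> carrier M1" "y \<in> carrier M1" for x y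
  proof -
    have "([Inl x, Inl y], [Inl (x \<otimes>\<^bsub>M1\<^esub> y)]) \<in> thue_cong ?A ?R"
      by (rule tc_rule[OF RF_LL[OF that]]) (simp_all add: GA_Inl that monoid.m_closed[OF M1])
    then have "cls ?A ?R [Inl (x \<otimes>\<^bsub>M1\<^esub> y)] = cls ?A ?R ([Inl x] @ [Inl y])"
      using cls_eq_iff tc_lists tc_sym by (metis append_Cons append_Nil)
    then show ?thesis unfolding io1_def using pres_mult[of "[Inl x]" ?A "[Inl y]" ?R] that by (simp add: GA_Inl)
  qed
  have io2m: "io2 (x \<otimes>\<^bsub>M2\<^esub> y) = io2 x \<otimes>\<^bsub>?P\<^esub> io2 y" if "x \<in> carrier M2" "y \<in> carrier M2" for x y
  proof -
    have "([Inr x, Inr y], [Inr (x \<otimes>\<^bsub>M2\<^esub> y)]) \<in> thue_cong ?A ?R"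
      by (rule tc_rule[OF RF_RR[OF that]]) (simp_all add: GA_Inr that monoid.m_closed[OF M2])
    then have "cls ?A ?R [Inr (x \<otimes>\<^bsub>M2\<^esub> y)] = cls ?A ?R ([Inr x] @ [Inr y])"
      using cls_eq_iff tc_lists tc_sym by (metis append_Cons append_Nil)
    then show ?thesis unfolding io2_def using pres_mult[of "[Inr x]" ?A "[Inr y]" ?R] that by (simp add: GA_Inr)
  qed
  have io11: "io1 \<one>\<^bsub>M1\<^esub> = \<one>\<^bsub>?P\<^esub>"
  proof -
    have "([Inl \<one>\<^bsub>M1\<^esub>], []) \<in> thue_cong ?A ?R"
      by (rule tc_rule[OF RF_L1]) (simp_all add: GA_Inl monoid.one_closed[OF M1])
    then show ?thesis unfolding io1_def pres_one using cls_eq_iff tc_lists by metis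
  qed
  have io21: "io2 \<one>\<^bsub>M2\<^esub> = \<one>\<^bsub>?P\<^esub>"
  proof -
    have "([Inr \<one>\<^bsub>M2\<^esub>], []) \<in> thue_cong ?A ?R"
      by (rule tc_rule[OF RF_R1]) (simp_all add: GA_Inr monoid.one_closed[OF M2])
    then show ?thesis unfolding io2_def pres_one using cls_eq_iff tc_lists by metis
  qed
  define f where "f n = (if n mod 2 = 0 then io1 (f1 (n div 2)) else io2 (f2 (n div 2)))" for n
  have f1c: "f1 \<in> B1 \<rightarrow> carrier M1" using pdata_f[OF pd1] .
  have f2c: "f2 \<in> B2 \<rightarrow> carrier M2" using pdata_f[OF pd2] .
  have fenc0: "f (enc 0 b) = io1 (f1 b)" for b unfolding f_def by simp
  have fenc1: "f (enc 1 b) = io2 (f2 b)" for b unfolding f_def by simp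
  have fc: "f \<in> B \<rightarrow> carrier ?P"
  proof
    fix n assume "n \<in> B"
    then obtain i b where n: "n = enc i b" "i < 2" "b \<in> BB i" unfolding B_def Bu_def by blast
    show "f n \<in> carrier ?P"
    proof (cases "i = 0")
      case True then show ?thesis using n fenc0 io1c f1c BB0 by auto
    next
      case False then have "i = 1" using n(2) by simp
      then show ?thesis using n fenc1 io2c f2c BB1 by auto
    qed
  qed
  have B1B: "map (enc 0) u \<in> lists B" if "u \<in> lists B1" for u
    unfolding B_def using map_enc_lists[of 0 u BB] that BB0 by simp
  have B2B: "map (enc 1) u \<in> lists B" if "u \<in> lists B2" for u
    unfolding B_def using map_enc_lists[of 1 u BB] that BB1 by simp
  have ev0: "ev ?P f (map (enc 0) u) = io1 (ev M1 f1 u)" if "u \<in> lists B1" for u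
    using that
  proof (induction u rule: lists.induct)
    case Nil then show ?case using io11 by simp
  next
    case (Cons b u)
    have "f1 b \<in> carrier M1" "ev M1 f1 u \<in> carrier M1" using f1c Cons ev_closed[OF M1 f1c] by auto
    then show ?case using Cons io1m fenc0 by simp
  qed
  have ev1: "ev ?P f (map (enc 1) u) = io2 (ev M2 f2 u)" if "u \<in> lists B2" for u
    using that
  proof (induction u rule: lists.induct)
    case Nil then show ?case using io21 by simp
  next
    case (Cons b u)
    have "f2 b \<in> carrier M2" "ev M2 f2 u \<in> carrier M2" using f2c Cons ev_closed[OF M2 f2c] by auto
    then show ?case using Cons io2m fenc1 by simp
  qed
  have surj: "\<exists>u. u \<in> lists B \<and> ev ?P f u = cls ?A ?R w" if "w \<in> lists ?A" for w
    using that
  proof (induction w rule: lists.induct)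
    case Nil then show ?case by (intro exI[of _ "[]"]) (simp add: pres_one)
  next
    case (Cons x w)
    obtain u' where u': "u' \<in> lists B" "ev ?P f u' = cls ?A ?R w" using Cons by blast
    have ew: "cls ?A ?R (x#w) = cls ?A ?R [x] \<otimes>\<^bsub>?P\<^esub> cls ?A ?R w"
      using pres_mult[of "[x]" ?A w ?R] Cons by simp
    obtain u0 where u0: "u0 \<in> lists B" "ev ?P f u0 = cls ?A ?R [x]"
    proof (cases x)
      case (Inl m)
      then have m: "m \<in> carrier M1" using Cons by (simp add: GA_Inl)
      obtain v where v: "v \<in> lists B1" "ev M1 f1 v = m" using pdata_surj[OF pd1 m] by blast
      show ?thesis using that[of "map (enc 0) v"] B1B[OF v(1)] ev0[OF v(1)] v(2) Inl io1_def by simp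
    next
      case (Inr m)
      then have m: "m \<in> carrier M2" using Cons by (simp add: GA_Inr)
      obtain v where v: "v \<in> lists B2" "ev M2 f2 v = m" using pdata_surj[OF pd2 m] by blast
      show ?thesis using that[of "map (enc 1) v"] B2B[OF v(1)] ev1[OF v(1)] v(2) Inr io2_def by simp
    qed
    have "ev ?P f (u0 @ u') = ev ?P f u0 \<otimes>\<^bsub>?P\<^esub> ev ?P f u'" by (rule ev_append[OF P fc u0(1) u'(1)])
    then show ?case using u0 u' ew by (intro exI[of _ "u0@u'"]) simp
  qed
  have respf: "\<forall>(l,r)\<in>S. l \<in> lists B \<longrightarrow> r \<in> lists B \<longrightarrow> ev ?P f l = ev ?P f r"
  proof (intro ballI)
    fix p assume "p \<in> S"
    then obtain i l r where p: "p = (map (enc i) l, map (enc i) r)" "i < 2" "(l,r) \<in> SS i"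
      unfolding S_def Su_def by blast
    have "ev ?P f (map (enc i) l) = ev ?P f (map (enc i) r)"
    proof (cases "i = 0")
      case True
      then have lr: "(l,r) \<in> S1" "l \<in> lists B1" "r \<in> lists B1" using p(3) SS0 h1(3) by auto
      have "ev M1 f1 l = ev M1 f1 r" using pdata_ker[OF pd1 lr(2,3)] tc_rule[OF lr] by simp
      then show ?thesis using True ev0 lr by simp
    next
      case False then have i1: "i = 1" using p(2) by simp
      then have lr: "(l,r) \<in> S2" "l \<in> lists B2" "r \<in> lists B2" using p(3) SS1 h2(3) by auto
      have "ev M2 f2 l = ev M2 f2 r" using pdata_ker[OF pd2 lr(2,3)] tc_rule[OF lr] by simp
      then show ?thesis using i1 ev1 lr by simp
    qed
    then show "case p of (l,r) \<Rightarrow> l \<in> lists B \<longrightarrow> r \<in> lists B \<longrightarrow> ev ?P f l = ev ?P f r"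
      unfolding p(1) by simp
  qed
  \<comment> \<open>kernel, hard direction via a homomorphism back into the presented monoid\<close>
  define wd1 where "wd1 m = (SOME u. u \<in> lists B1 \<and> ev M1 f1 u = m)" for m
  define wd2 where "wd2 m = (SOME u. u \<in> lists B2 \<and> ev M2 f2 u = m)" for m
  have wd1: "wd1 m \<in> lists B1 \<and> ev M1 f1 (wd1 m) = m" if "m \<in> carrier M1" for m
    unfolding wd1_def using pdata_surj[OF pd1 that] by (rule someI_ex)
  have wd2: "wd2 m \<in> lists B2 \<and> ev M2 f2 (wd2 m) = m" if "m \<in> carrier M2" for m
    unfolding wd2_def using pdata_surj[OF pd2 that] by (rule someI_ex)
  have eq1: "cls B S (map (enc 0) u) = cls B S (map (enc 0) v)"
    if "u \<in> lists B1" "v \<in> lists B1" "ev M1 f1 u = ev M1 f1 v" for u v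
  proof -
    have "(u,v) \<in> thue_cong (BB 0) (SS 0)" using pdata_ker[OF pd1 that(1,2)] that(3) BB0 SS0 by simp
    then have "(map (enc 0) u, map (enc 0) v) \<in> thue_cong B S"
      unfolding B_def S_def by (rule tc_enc[where BB=BB and SS=SS, rotated]) simp
    then show ?thesis using cls_eq_iff B1B that by metis
  qed
  have eq2: "cls B S (map (enc 1) u) = cls B S (map (enc 1) v)"
    if "u \<in> lists B2" "v \<in> lists B2" "ev M2 f2 u = ev M2 f2 v" for u v
  proof -
    have "(u,v) \<in> thue_cong (BB 1) (SS 1)" using pdata_ker[OF pd2 that(1,2)] that(3) BB1 SS1 by simp
    then have "(map (enc 1) u, map (enc 1) v) \<in> thue_cong B S"
      unfolding B_def S_def by (rule tc_enc[where BB=BB and SS=SS, rotated]) simp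
    then show ?thesis using cls_eq_iff B2B that by metis
  qed
  define psi where "psi x = (case x of Inl m \<Rightarrow> cls B S (map (enc 0) (wd1 m)) | Inr m \<Rightarrow> cls B S (map (enc 1) (wd2 m)))" for x
  have psic: "psi \<in> ?A \<rightarrow> carrier ?Q"
  proof
    fix x assume "x \<in> ?A"
    then show "psi x \<in> carrier ?Q"
    proof (cases x)
      case (Inl m)
      then have "m \<in> carrier M1" using \<open>x \<in> ?A\<close> by (simp add: GA_Inl)
      then show ?thesis using Inl cls_in_carrier[OF B1B[OF conjunct1[OF wd1]]] by (simp add: psi_def)
    next
      case (Inr m)
      then have "m \<in> carrier M2" using \<open>x \<in> ?A\<close> by (simp add: GA_Inr)
      then show ?thesis using Inr cls_in_carrier[OF B2B[OF conjunct1[OF wd2]]] by (simp add: psi_def)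
    qed
  qed
  have psiInl: "psi (Inl m) = cls B S (map (enc 0) (wd1 m))" for m by (simp add: psi_def)
  have psiInr: "psi (Inr m) = cls B S (map (enc 1) (wd2 m))" for m by (simp add: psi_def)
  have respQ: "\<forall>(l,r)\<in>?R. l \<in> lists ?A \<longrightarrow> r \<in> lists ?A \<longrightarrow> ev ?Q psi l = ev ?Q psi r"
  proof (intro ballI)
    fix p assume "p \<in> ?R"
    obtain l r where p: "p = (l,r)" by (cases p)
    have "ev ?Q psi l = ev ?Q psi r" using \<open>p \<in> ?R\<close> unfolding p
    proof (cases rule: RF_cases)
      case (LL x y)
      have xy: "x \<otimes>\<^bsub>M1\<^esub> y \<in> carrier M1" using LL monoid.m_closed[OF M1] by simp
      have w: "wd1 x @ wd1 y \<in> lists B1" "wd1 (x \<otimes>\<^bsub>M1\<^esub> y) \<in> lists B1" using wd1 LL xy by auto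
      have "ev M1 f1 (wd1 x @ wd1 y) = x \<otimes>\<^bsub>M1\<^esub> y" using ev_append[OF M1 f1c] wd1 LL by simp
      also have "\<dots> = ev M1 f1 (wd1 (x \<otimes>\<^bsub>M1\<^esub> y))" using wd1[OF xy] by simp
      finally have "cls B S (map (enc 0) (wd1 x @ wd1 y)) = cls B S (map (enc 0) (wd1 (x \<otimes>\<^bsub>M1\<^esub> y)))"
        using eq1 w by blast
      moreover have "ev ?Q psi l = cls B S (map (enc 0) (wd1 x @ wd1 y))"
        using LL pres_mult[of "map (enc 0) (wd1 x)" B "map (enc 0) (wd1 y) @ []" S] B1B wd1
        by (simp add: psiInl pres_mult pres_one)
      moreover have "ev ?Q psi r = cls B S (map (enc 0) (wd1 (x \<otimes>\<^bsub>M1\<^esub> y)))"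
        using LL B1B wd1[OF xy] by (simp add: psiInl pres_mult pres_one)
      ultimately show ?thesis by simp
    next
      case L1
      have o: "\<one>\<^bsub>M1\<^esub> \<in> carrier M1" using monoid.one_closed[OF M1] .
      have "cls B S (map (enc 0) (wd1 \<one>\<^bsub>M1\<^esub>)) = cls B S (map (enc 0) [])"
        using eq1[of "wd1 \<one>\<^bsub>M1\<^esub>" "[]"] wd1[OF o] by simp
      then show ?thesis using L1 B1B wd1[OF o] by (simp add: psiInl pres_mult pres_one)
    next
      case (RR x y)
      have xy: "x \<otimes>\<^bsub>M2\<^esub> y \<in> carrier M2" using RR monoid.m_closed[OF M2] by simp
      have w: "wd2 x @ wd2 y \<in> lists B2" "wd2 (x \<otimes>\<^bsub>M2\<^esub> y) \<in> lists B2" using wd2 RR xy by auto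
      have "ev M2 f2 (wd2 x @ wd2 y) = x \<otimes>\<^bsub>M2\<^esub> y" using ev_append[OF M2 f2c] wd2 RR by simp
      also have "\<dots> = ev M2 f2 (wd2 (x \<otimes>\<^bsub>M2\<^esub> y))" using wd2[OF xy] by simp
      finally have "cls B S (map (enc 1) (wd2 x @ wd2 y)) = cls B S (map (enc 1) (wd2 (x \<otimes>\<^bsub>M2\<^esub> y)))"
        using eq2 w by blast
      moreover have "ev ?Q psi l = cls B S (map (enc 1) (wd2 x @ wd2 y))"
        using RR B2B wd2
        by (simp add: psiInr pres_mult pres_one)
      moreover have "ev ?Q psi r = cls B S (map (enc 1) (wd2 (x \<otimes>\<^bsub>M2\<^esub> y)))"
        using RR B2B wd2[OF xy] by (simp add: psiInr pres_mult pres_one)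
      ultimately show ?thesis by simp
    next
      case R1
      have o: "\<one>\<^bsub>M2\<^esub> \<in> carrier M2" using monoid.one_closed[OF M2] .
      have "cls B S (map (enc 1) (wd2 \<one>\<^bsub>M2\<^esub>)) = cls B S (map (enc 1) [])"
        using eq2[of "wd2 \<one>\<^bsub>M2\<^esub>" "[]"] wd2[OF o] by simp
      then show ?thesis using R1 B2B wd2[OF o] by (simp add: psiInr pres_mult pres_one)
    qed
    then show "case p of (l,r) \<Rightarrow> l \<in> lists ?A \<longrightarrow> r \<in> lists ?A \<longrightarrow> ev ?Q psi l = ev ?Q psi r"
      unfolding p by simp
  qed
  define Psi where "Psi = ind ?Q psi"
  have Psihom: "Psi \<in> hom ?P ?Q" unfolding Psi_def by (rule ind_hom[OF Q psic respQ])
  have Psi1: "Psi \<one>\<^bsub>?P\<^esub> = \<one>\<^bsub>?Q\<^esub>" unfolding Psi_def by (rule ind_one[OF Q psic respQ])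
  have Psicls: "Psi (cls ?A ?R w) = ev ?Q psi w" if "w \<in> lists ?A" for w
    unfolding Psi_def by (rule ind_cls[OF Q psic respQ that])
  have Psif: "Psi (f n) = cls B S [n]" if nB: "n \<in> B" for n
  proof -
    obtain i b where n: "n = enc i b" "i < 2" "b \<in> BB i" using nB unfolding B_def Bu_def by blast
    show ?thesis
    proof (cases "i = 0")
      case True
      have b: "b \<in> B1" using n True BB0 by simp
      have m: "f1 b \<in> carrier M1" using f1c b by auto
      have "Psi (f n) = ev ?Q psi [Inl (f1 b)]"
        using n True fenc0 Psicls[of "[Inl (f1 b)]"] m io1_def by (simp add: GA_Inl)
      also have "\<dots> = cls B S (map (enc 0) (wd1 (f1 b)))"
        using pres_mult[OF B1B[OF conjunct1[OF wd1[OF m]]], of "[]" S] by (simp add: psiInl pres_one)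
      also have "\<dots> = cls B S (map (enc 0) [b])"
        using eq1[of "wd1 (f1 b)" "[b]"] wd1[OF m] b m monoid.r_one[OF M1] by simp
      finally show ?thesis using n True by simp
    next
      case False then have i1: "i = 1" using n(2) by simp
      have b: "b \<in> B2" using n i1 BB1 by simp
      have m: "f2 b \<in> carrier M2" using f2c b by auto
      have "Psi (f n) = ev ?Q psi [Inr (f2 b)]"
        using n i1 fenc1 Psicls[of "[Inr (f2 b)]"] m io2_def by (simp add: GA_Inr)
      also have "\<dots> = cls B S (map (enc 1) (wd2 (f2 b)))"
        using pres_mult[OF B2B[OF conjunct1[OF wd2[OF m]]], of "[]" S] by (simp add: psiInr pres_one)
      also have "\<dots> = cls B S (map (enc 1) [b])"
        using eq2[of "wd2 (f2 b)" "[b]"] wd2[OF m] b m monoid.r_one[OF M2] by simp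
      finally show ?thesis using n i1 by simp
    qed
  qed
  have Psiev: "Psi (ev ?P f u) = cls B S u" if "u \<in> lists B" for u
    using that
  proof (induction u rule: lists.induct)
    case Nil then show ?case using Psi1 by (simp add: pres_one)
  next
    case (Cons n u)
    have c: "f n \<in> carrier ?P" "ev ?P f u \<in> carrier ?P" using fc Cons ev_closed[OF P fc] by auto
    have "Psi (ev ?P f (n#u)) = Psi (f n) \<otimes>\<^bsub>?Q\<^esub> Psi (ev ?P f u)"
      using Psihom c unfolding hom_def by simp
    also have "\<dots> = cls B S [n] \<otimes>\<^bsub>?Q\<^esub> cls B S u" using Psif Cons by simp
    also have "\<dots> = cls B S (n#u)" using pres_mult[of "[n]" B u S] Cons by simp
    finally show ?case .
  qed
  have "pdata ?P B S f"
    unfolding pdata_def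
  proof (intro conjI ballI)
    show "f \<in> B \<rightarrow> carrier ?P" by (rule fc)
  next
    fix X assume "X \<in> carrier ?P"
    then obtain w where w: "w \<in> lists ?A" "X = cls ?A ?R w" by (rule pres_carrierE)
    then show "\<exists>u\<in>lists B. ev ?P f u = X" using surj by blast
  next
    fix u v assume u: "u \<in> lists B" and v: "v \<in> lists B"
    show "ev ?P f u = ev ?P f v \<longleftrightarrow> (u,v) \<in> thue_cong B S"
    proof
      assume "ev ?P f u = ev ?P f v"
      then have "cls B S u = cls B S v" using Psiev u v by metis
      then show "(u,v) \<in> thue_cong B S" using cls_eq_iff u v by metis
    next
      assume "(u,v) \<in> thue_cong B S"
      then show "ev ?P f u = ev ?P f v" by (rule ev_respects[OF P fc respf])
    qed
  qed
  then have "FCRS ?P" unfolding FCRS_iff[OF P] using finB finS Slists compS by blast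
  then show ?thesis by (simp add: fp_def)
qed

theorem corollary4p3:
  fixes M1 :: "('a, 'e1) monoid_scheme" and M2 :: "('b, 'e2) monoid_scheme"
  assumes "monoid M1" and "monoid M2"
    and "homogeneous_monoid M1" and "homogeneous_monoid M2"
  shows "FCRS (free_product M1 M2) \<longleftrightarrow> FCRS M1 \<and> FCRS M2"
proof
  assume h: "FCRS (free_product M1 M2)"
  show "FCRS M1 \<and> FCRS M2"
    using fp_left[OF assms(1,2,4) h] fp_right[OF assms(2,1,3) h] by blast
next
  assume "FCRS M1 \<and> FCRS M2"
  then show "FCRS (free_product M1 M2)" using fp_union[OF assms(1,2)] by blast
qed

end
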